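(* Let $\mathcal{C}$ be a skeletally small triangulated category. For a dense subcategory $\mathcal{D}$ of $\mathcal{C}$ let $\delta^{\mathcal{D}}_{\mathbb{Q}}\colon G(\mathcal{D})_{\mathbb{Q}}\to G(\mathcal{C})_{\mathbb{Q}}$ be the map induced by inclusion (which is injective). Then: (1) For every $\mathbb{Q}$-subspace $H$ of $G(\mathcal{C})_{\mathbb{Q}}$ there exists a radical dense subcategory $\mathcal{D}$ of $\mathcal{C}$ with $\operatorname{image}\delta^{\mathcal{D}}_{\mathbb{Q}} = H$. (2) If $\mathcal{D}_1,\mathcal{D}_2$ are radical dense subcategories of $\mathcal{C}$ with $\operatorname{image}\delta^{\mathcal{D}_1}_{\mathbb{Q}} = \operatorname{image}\delta^{\mathcal{D}_2}_{\mathbb{Q}}$, then $\mathcal{D}_1=\mathcal{D}_2$. Write $\mathcal{D}_H$ for the unique radical dense subcategory with $\operatorname{image}\delta^{\mathcal{D}_H}_{\mathbb{Q}} = H$. (3) For $\mathbb{Q}$-subspaces $H_1,H_2$ of $G(\mathcal{C})_{\mathbb{Q}}$, $\mathcal{D}_{H_1}\subseteq \mathcal{D}_{H_2}$ if and only if $H_1\subseteq H_2$.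
   Context: $G(\mathcal{C})$ is the Grothendieck group of the triangulated category $\mathcal{C}$: free abelian group on isomorphism classes of objects modulo $[V]=[U]+[W]$ for each exact triangle $U\to V\to W\to U[1]$; $H_{\mathbb{Q}}=H\otimes_{\mathbb{Z}}\mathbb{Q}$. A triangulated subcategory is a full subcategory closed under $[\pm1]$, isomorphisms and cones of triangles whose first two terms lie in it. A triangulated subcategory $\mathcal{D}$ is dense if for every $U\in\mathcal{C}$ there is $V\in\mathcal{C}$ with $U\oplus V\in\mathcal{D}$; it is radical if $U^n\in\mathcal{D}$ for some $n\ge1$ implies $U\in\mathcal{D}$. *)

theory Defs
  imports Complex_Main "HOL-Library.Function_Algebras"
begin

text \<open>Objects form a set Ob, so the category is automatically (skeletally) small.
A triangle (X,Y,Z,f,g,h) stands for X --f--> Y --g--> Z --h--> X[1].\<close>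

record ('o, 'm) tricat =
  Ob   :: "'o set"
  Hom  :: "'o \<Rightarrow> 'o \<Rightarrow> 'm set"
  cmp  :: "'m \<Rightarrow> 'm \<Rightarrow> 'm"      (* cmp g f = g o f *)
  idm  :: "'o \<Rightarrow> 'm"
  madd :: "'m \<Rightarrow> 'm \<Rightarrow> 'm"
  mneg :: "'m \<Rightarrow> 'm"
  zm   :: "'o \<Rightarrow> 'o \<Rightarrow> 'm"
  sh   :: "'o \<Rightarrow> 'o"
  shm  :: "'m \<Rightarrow> 'm"
  Tri  :: "('o \<times> 'o \<times> 'o \<times> 'm \<times> 'm \<times> 'm) set"

definition is_iso :: "('o,'m) tricat \<Rightarrow> 'm \<Rightarrow> 'o \<Rightarrow> 'o \<Rightarrow> bool" where
  "is_iso C f X Y \<longleftrightarrow> f \<in> Hom C X Y \<and>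
     (\<exists>g \<in> Hom C Y X. cmp C g f = idm C X \<and> cmp C f g = idm C Y)"

definition isomorphic :: "('o,'m) tricat \<Rightarrow> 'o \<Rightarrow> 'o \<Rightarrow> bool" where
  "isomorphic C X Y \<longleftrightarrow> X \<in> Ob C \<and> Y \<in> Ob C \<and> (\<exists>f. is_iso C f X Y)"

definition is_zero_obj :: "('o,'m) tricat \<Rightarrow> 'o \<Rightarrow> bool" where
  "is_zero_obj C Z \<longleftrightarrow> Z \<in> Ob C \<and>
     (\<forall>X \<in> Ob C. Hom C Z X = {zm C Z X} \<and> Hom C X Z = {zm C X Z})"

definition is_dsum :: "('o,'m) tricat \<Rightarrow> 'o \<Rightarrow> 'o \<Rightarrow> 'o \<Rightarrow> bool" where
  "is_dsum C X Y S \<longleftrightarrow> X \<in> Ob C \<and> Y \<in> Ob C \<and> S \<in> Ob C \<and>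
     (\<exists>p1 p2 i1 i2. p1 \<in> Hom C S X \<and> p2 \<in> Hom C S Y \<and> i1 \<in> Hom C X S \<and> i2 \<in> Hom C Y S \<and>
        cmp C p1 i1 = idm C X \<and> cmp C p2 i2 = idm C Y \<and>
        cmp C p1 i2 = zm C Y X \<and> cmp C p2 i1 = zm C X Y \<and>
        madd C (cmp C i1 p1) (cmp C i2 p2) = idm C S)"

definition is_tri_shape :: "('o,'m) tricat \<Rightarrow> ('o \<times> 'o \<times> 'o \<times> 'm \<times> 'm \<times> 'm) \<Rightarrow> bool" where
  "is_tri_shape C T \<longleftrightarrow> (case T of (X,Y,Z,f,g,h) \<Rightarrow>
     X \<in> Ob C \<and> Y \<in> Ob C \<and> Z \<in> Ob C \<and> f \<in> Hom C X Y \<and> g \<in> Hom C Y Z \<and> h \<in> Hom C Z (sh C X))"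

definition tri_mor :: "('o,'m) tricat \<Rightarrow> ('o \<times> 'o \<times> 'o \<times> 'm \<times> 'm \<times> 'm) \<Rightarrow>
    ('o \<times> 'o \<times> 'o \<times> 'm \<times> 'm \<times> 'm) \<Rightarrow> 'm \<Rightarrow> 'm \<Rightarrow> 'm \<Rightarrow> bool" where
  "tri_mor C T T' a b c \<longleftrightarrow> (case T of (X,Y,Z,f,g,h) \<Rightarrow> case T' of (X',Y',Z',f',g',h') \<Rightarrow>
     a \<in> Hom C X X' \<and> b \<in> Hom C Y Y' \<and> c \<in> Hom C Z Z' \<and>
     cmp C b f = cmp C f' a \<and> cmp C c g = cmp C g' b \<and> cmp C (shm C a) h = cmp C h' c)"

definition preadditive_cat :: "('o,'m) tricat \<Rightarrow> bool" where
  "preadditive_cat C \<longleftrightarrow>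
    (\<forall>X \<in> Ob C. idm C X \<in> Hom C X X) \<and>
    (\<forall>X \<in> Ob C. \<forall>Y \<in> Ob C. \<forall>Z \<in> Ob C. \<forall>f \<in> Hom C X Y. \<forall>g \<in> Hom C Y Z.
        cmp C g f \<in> Hom C X Z) \<and>
    (\<forall>X \<in> Ob C. \<forall>Y \<in> Ob C. \<forall>f \<in> Hom C X Y.
        cmp C f (idm C X) = f \<and> cmp C (idm C Y) f = f) \<and>
    (\<forall>W \<in> Ob C. \<forall>X \<in> Ob C. \<forall>Y \<in> Ob C. \<forall>Z \<in> Ob C.
       \<forall>f \<in> Hom C W X. \<forall>g \<in> Hom C X Y. \<forall>h \<in> Hom C Y Z.
        cmp C h (cmp C g f) = cmp C (cmp C h g) f) \<and>
    (\<forall>X \<in> Ob C. \<forall>Y \<in> Ob C.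
       zm C X Y \<in> Hom C X Y \<and>
       (\<forall>f \<in> Hom C X Y. \<forall>g \<in> Hom C X Y. madd C f g \<in> Hom C X Y) \<and>
       (\<forall>f \<in> Hom C X Y. mneg C f \<in> Hom C X Y) \<and>
       (\<forall>f \<in> Hom C X Y. \<forall>g \<in> Hom C X Y. \<forall>h \<in> Hom C X Y.
          madd C (madd C f g) h = madd C f (madd C g h)) \<and>
       (\<forall>f \<in> Hom C X Y. \<forall>g \<in> Hom C X Y. madd C f g = madd C g f) \<and>
       (\<forall>f \<in> Hom C X Y. madd C f (zm C X Y) = f) \<and>
       (\<forall>f \<in> Hom C X Y. madd C f (mneg C f) = zm C X Y)) \<and>
    (\<forall>X \<in> Ob C. \<forall>Y \<in> Ob C. \<forall>Z \<in> Ob C.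
       (\<forall>f \<in> Hom C X Y. \<forall>g \<in> Hom C Y Z. \<forall>g' \<in> Hom C Y Z.
          cmp C (madd C g g') f = madd C (cmp C g f) (cmp C g' f)) \<and>
       (\<forall>f \<in> Hom C X Y. \<forall>f' \<in> Hom C X Y. \<forall>g \<in> Hom C Y Z.
          cmp C g (madd C f f') = madd C (cmp C g f) (cmp C g f')))"

definition additive_cat :: "('o,'m) tricat \<Rightarrow> bool" where
  "additive_cat C \<longleftrightarrow> preadditive_cat C \<and>
    (\<exists>Z. is_zero_obj C Z) \<and>
    (\<forall>X \<in> Ob C. \<forall>Y \<in> Ob C. \<exists>S. is_dsum C X Y S)"

definition shift_auto :: "('o,'m) tricat \<Rightarrow> bool" where
  "shift_auto C \<longleftrightarrow>
    bij_betw (sh C) (Ob C) (Ob C) \<and>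
    (\<forall>X \<in> Ob C. \<forall>Y \<in> Ob C. bij_betw (shm C) (Hom C X Y) (Hom C (sh C X) (sh C Y))) \<and>
    (\<forall>X \<in> Ob C. shm C (idm C X) = idm C (sh C X)) \<and>
    (\<forall>X \<in> Ob C. \<forall>Y \<in> Ob C. \<forall>Z \<in> Ob C. \<forall>f \<in> Hom C X Y. \<forall>g \<in> Hom C Y Z.
        shm C (cmp C g f) = cmp C (shm C g) (shm C f)) \<and>
    (\<forall>X \<in> Ob C. \<forall>Y \<in> Ob C. \<forall>f \<in> Hom C X Y. \<forall>g \<in> Hom C X Y.
        shm C (madd C f g) = madd C (shm C f) (shm C g))"

definition triangulated :: "('o,'m) tricat \<Rightarrow> bool" where
  "triangulated C \<longleftrightarrow> additive_cat C \<and> shift_auto C \<and>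
    (\<forall>T \<in> Tri C. is_tri_shape C T) \<and>
    \<comment> \<open>TR1: closure under isomorphism of triangles\<close>
    (\<forall>T \<in> Tri C. \<forall>T'. is_tri_shape C T' \<longrightarrow>
       (\<exists>a b c. tri_mor C T T' a b c \<and>
          is_iso C a (fst T) (fst T') \<and> is_iso C b (fst (snd T)) (fst (snd T')) \<and>
          is_iso C c (fst (snd (snd T))) (fst (snd (snd T')))) \<longrightarrow> T' \<in> Tri C) \<and>
    \<comment> \<open>TR1: X --id--> X --> 0 --> X[1] is exact\<close>
    (\<forall>X \<in> Ob C. \<forall>Z. is_zero_obj C Z \<longrightarrow>
       (X, X, Z, idm C X, zm C X Z, zm C Z (sh C X)) \<in> Tri C) \<and>
    \<comment> \<open>TR1: every morphism embeds in an exact triangle\<close>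
    (\<forall>X \<in> Ob C. \<forall>Y \<in> Ob C. \<forall>f \<in> Hom C X Y. \<exists>Z g h. (X, Y, Z, f, g, h) \<in> Tri C) \<and>
    \<comment> \<open>TR2: rotation\<close>
    (\<forall>X Y Z f g h. is_tri_shape C (X, Y, Z, f, g, h) \<longrightarrow>
       ((X, Y, Z, f, g, h) \<in> Tri C \<longleftrightarrow> (Y, Z, sh C X, g, h, mneg C (shm C f)) \<in> Tri C)) \<and>
    \<comment> \<open>TR3: morphism extension\<close>
    (\<forall>T \<in> Tri C. \<forall>T' \<in> Tri C. \<forall>a b.
       (case T of (X,Y,Z,f,g,h) \<Rightarrow> case T' of (X',Y',Z',f',g',h') \<Rightarrow>
          a \<in> Hom C X X' \<and> b \<in> Hom C Y Y' \<and> cmp C b f = cmp C f' a) \<longrightarrow>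
       (\<exists>c. tri_mor C T T' a b c)) \<and>
    \<comment> \<open>TR4: octahedral axiom\<close>
    (\<forall>X Y Z Z' X' Y' f g i i' k k' l l'.
       (X, Y, Z', f, i, i') \<in> Tri C \<longrightarrow> (Y, Z, X', g, k, k') \<in> Tri C \<longrightarrow>
       (X, Z, Y', cmp C g f, l, l') \<in> Tri C \<longrightarrow>
       (\<exists>u v. (Z', Y', X', u, v, cmp C (shm C i) k') \<in> Tri C \<and>
          cmp C u i = cmp C l g \<and> cmp C l' u = i' \<and>
          cmp C v l = k \<and> cmp C k' v = cmp C (shm C f) l'))"

text \<open>Full subcategories are given by their sets of objects.\<close>
definition tri_subcat :: "('o,'m) tricat \<Rightarrow> 'o set \<Rightarrow> bool" where
  "tri_subcat C D \<longleftrightarrow> D \<subseteq> Ob C \<and>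
     (\<forall>X \<in> D. sh C X \<in> D) \<and> (\<forall>X \<in> Ob C. sh C X \<in> D \<longrightarrow> X \<in> D) \<and>
     (\<forall>X \<in> D. \<forall>Y. isomorphic C X Y \<longrightarrow> Y \<in> D) \<and>
     (\<forall>X Y Z f g h. (X, Y, Z, f, g, h) \<in> Tri C \<longrightarrow> X \<in> D \<longrightarrow> Y \<in> D \<longrightarrow> Z \<in> D)"

definition dense_subcat :: "('o,'m) tricat \<Rightarrow> 'o set \<Rightarrow> bool" where
  "dense_subcat C D \<longleftrightarrow> tri_subcat C D \<and>
     (\<forall>U \<in> Ob C. \<exists>V \<in> Ob C. \<exists>S. is_dsum C U V S \<and> S \<in> D)"

inductive is_power :: "('o,'m) tricat \<Rightarrow> 'o \<Rightarrow> nat \<Rightarrow> 'o \<Rightarrow> bool" for C where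
  pw_one: "U \<in> Ob C \<Longrightarrow> is_power C U (Suc 0) U"
| pw_suc: "is_power C U n T \<Longrightarrow> is_dsum C T U S \<Longrightarrow> is_power C U (Suc n) S"

definition radical_subcat :: "('o,'m) tricat \<Rightarrow> 'o set \<Rightarrow> bool" where
  "radical_subcat C D \<longleftrightarrow> tri_subcat C D \<and>
     (\<forall>U \<in> Ob C. (\<exists>n S. n \<ge> 1 \<and> is_power C U n S \<and> S \<in> D) \<longrightarrow> U \<in> D)"

text \<open>G(C)_Q = (free abelian group on iso classes / relations) \<otimes> Q, realised as the
free Q-vector space on the objects (finitely supported functions) modulo the Q-span of
[Y]-[X] for X \<cong> Y and [V]-[U]-[W] for exact triangles U \<rightarrow> V \<rightarrow> W \<rightarrow> U[1].
Elements of G(C)_Q are cosets v + R.\<close>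

definition gen :: "'o \<Rightarrow> ('o \<Rightarrow> rat)" where
  "gen X = (\<lambda>Y. if Y = X then 1 else 0)"

inductive_set qspan :: "('o \<Rightarrow> rat) set \<Rightarrow> ('o \<Rightarrow> rat) set" for S where
  qs_zero: "0 \<in> qspan S"
| qs_gen: "v \<in> S \<Longrightarrow> v \<in> qspan S"
| qs_add: "v \<in> qspan S \<Longrightarrow> w \<in> qspan S \<Longrightarrow> v + w \<in> qspan S"
| qs_smult: "v \<in> qspan S \<Longrightarrow> (\<lambda>x. c * v x) \<in> qspan S"

definition freeQ :: "('o,'m) tricat \<Rightarrow> ('o \<Rightarrow> rat) set" where
  "freeQ C = qspan (gen ` Ob C)"

definition relsQ :: "('o,'m) tricat \<Rightarrow> ('o \<Rightarrow> rat) set" where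
  "relsQ C = qspan ({gen Y - gen X | X Y. isomorphic C X Y} \<union>
                    {gen V - gen U - gen W | U V W f g h. (U, V, W, f, g, h) \<in> Tri C})"

definition gcls :: "('o,'m) tricat \<Rightarrow> ('o \<Rightarrow> rat) \<Rightarrow> ('o \<Rightarrow> rat) set" where
  "gcls C v = {v + r | r. r \<in> relsQ C}"

definition GQ :: "('o,'m) tricat \<Rightarrow> ('o \<Rightarrow> rat) set set" where
  "GQ C = gcls C ` freeQ C"

definition qsubspace :: "('o,'m) tricat \<Rightarrow> ('o \<Rightarrow> rat) set set \<Rightarrow> bool" where
  "qsubspace C H \<longleftrightarrow> H \<subseteq> GQ C \<and> gcls C 0 \<in> H \<and>
     (\<forall>a \<in> freeQ C. \<forall>b \<in> freeQ C. gcls C a \<in> H \<longrightarrow> gcls C b \<in> H \<longrightarrow> gcls C (a + b) \<in> H) \<and>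
     (\<forall>a \<in> freeQ C. \<forall>c. gcls C a \<in> H \<longrightarrow> gcls C (\<lambda>x. c * a x) \<in> H)"

text \<open>Image of delta^D_Q : G(D)_Q \<rightarrow> G(C)_Q, i.e. the Q-span of the classes [X], X \<in> D.\<close>
definition im_delta :: "('o,'m) tricat \<Rightarrow> 'o set \<Rightarrow> ('o \<Rightarrow> rat) set set" where
  "im_delta C D = gcls C ` qspan (gen ` D)"

definition radical_dense :: "('o,'m) tricat \<Rightarrow> 'o set \<Rightarrow> bool" where
  "radical_dense C D \<longleftrightarrow> dense_subcat C D \<and> radical_subcat C D"

definition D_of :: "('o,'m) tricat \<Rightarrow> ('o \<Rightarrow> rat) set set \<Rightarrow> 'o set" where
  "D_of C H = (THE D. radical_dense C D \<and> im_delta C D = H)"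

end

theory Submission
  imports Defs "HOL-Library.Multiset"
begin


locale TC = fixes C :: "('o,'m) tricat" assumes tri: "triangulated C"
begin

lemma pre: "preadditive_cat C" using tri unfolding triangulated_def additive_cat_def by blast

lemma idm[simp]: "X \<in> Ob C \<Longrightarrow> idm C X \<in> Hom C X X" using pre unfolding preadditive_cat_def by (elim conjE; simp)
lemma cmpH: "\<lbrakk>X \<in> Ob C; Y \<in> Ob C; Z \<in> Ob C; f \<in> Hom C X Y; g \<in> Hom C Y Z\<rbrakk> \<Longrightarrow> cmp C g f \<in> Hom C X Z"
  using pre unfolding preadditive_cat_def by (elim conjE; simp)
lemma idr: "\<lbrakk>X \<in> Ob C; Y \<in> Ob C; f \<in> Hom C X Y\<rbrakk> \<Longrightarrow> cmp C f (idm C X) = f"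
  using pre unfolding preadditive_cat_def by (elim conjE; simp)
lemma idl: "\<lbrakk>X \<in> Ob C; Y \<in> Ob C; f \<in> Hom C X Y\<rbrakk> \<Longrightarrow> cmp C (idm C Y) f = f"
  using pre unfolding preadditive_cat_def by (elim conjE; simp)
lemma assoc: "\<lbrakk>W \<in> Ob C; X \<in> Ob C; Y \<in> Ob C; Z \<in> Ob C; f \<in> Hom C W X; g \<in> Hom C X Y; h \<in> Hom C Y Z\<rbrakk>
   \<Longrightarrow> cmp C h (cmp C g f) = cmp C (cmp C h g) f"
  using pre unfolding preadditive_cat_def by (elim conjE; simp)
lemma zmH[simp]: "\<lbrakk>X \<in> Ob C; Y \<in> Ob C\<rbrakk> \<Longrightarrow> zm C X Y \<in> Hom C X Y"
  using pre unfolding preadditive_cat_def by (elim conjE; simp)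
lemma addH: "\<lbrakk>X \<in> Ob C; Y \<in> Ob C; f \<in> Hom C X Y; g \<in> Hom C X Y\<rbrakk> \<Longrightarrow> madd C f g \<in> Hom C X Y"
  using pre unfolding preadditive_cat_def by (elim conjE; simp)
lemma negH: "\<lbrakk>X \<in> Ob C; Y \<in> Ob C; f \<in> Hom C X Y\<rbrakk> \<Longrightarrow> mneg C f \<in> Hom C X Y"
  using pre unfolding preadditive_cat_def by (elim conjE; simp)
lemma add_assoc: "\<lbrakk>X \<in> Ob C; Y \<in> Ob C; f \<in> Hom C X Y; g \<in> Hom C X Y; h \<in> Hom C X Y\<rbrakk> \<Longrightarrow>
   madd C (madd C f g) h = madd C f (madd C g h)"
  using pre unfolding preadditive_cat_def by (elim conjE; simp)
lemma add_comm: "\<lbrakk>X \<in> Ob C; Y \<in> Ob C; f \<in> Hom C X Y; g \<in> Hom C X Y\<rbrakk> \<Longrightarrow> madd C f g = madd C g f"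
  using pre unfolding preadditive_cat_def by (elim conjE; simp)
lemma add_zr: "\<lbrakk>X \<in> Ob C; Y \<in> Ob C; f \<in> Hom C X Y\<rbrakk> \<Longrightarrow> madd C f (zm C X Y) = f"
  using pre unfolding preadditive_cat_def by (elim conjE; simp)
lemma add_neg: "\<lbrakk>X \<in> Ob C; Y \<in> Ob C; f \<in> Hom C X Y\<rbrakk> \<Longrightarrow> madd C f (mneg C f) = zm C X Y"
  using pre unfolding preadditive_cat_def by (elim conjE; simp)
lemma distl: "\<lbrakk>X \<in> Ob C; Y \<in> Ob C; Z \<in> Ob C; f \<in> Hom C X Y; g \<in> Hom C Y Z; g' \<in> Hom C Y Z\<rbrakk> \<Longrightarrow>
   cmp C (madd C g g') f = madd C (cmp C g f) (cmp C g' f)"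
  using pre unfolding preadditive_cat_def by (elim conjE; simp)
lemma distr: "\<lbrakk>X \<in> Ob C; Y \<in> Ob C; Z \<in> Ob C; f \<in> Hom C X Y; f' \<in> Hom C X Y; g \<in> Hom C Y Z\<rbrakk> \<Longrightarrow>
   cmp C g (madd C f f') = madd C (cmp C g f) (cmp C g f')"
  using pre unfolding preadditive_cat_def by (elim conjE; simp)

lemma add_zl: "\<lbrakk>X \<in> Ob C; Y \<in> Ob C; f \<in> Hom C X Y\<rbrakk> \<Longrightarrow> madd C (zm C X Y) f = f"
  by (metis add_comm add_zr zmH)

lemma idem_zero: assumes "X \<in> Ob C" "Y \<in> Ob C" "x \<in> Hom C X Y" "madd C x x = x" shows "x = zm C X Y"
proof -
  have n: "mneg C x \<in> Hom C X Y" using negH assms by blast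
  have "x = madd C x (madd C x (mneg C x))" using assms add_neg[of X Y x] add_zr[of X Y x] by simp
  also have "\<dots> = madd C (madd C x x) (mneg C x)" using assms n add_assoc[of X Y x x "mneg C x"] by simp
  also have "\<dots> = zm C X Y" using assms add_neg[of X Y x] by simp
  finally show ?thesis .
qed

lemma neg_unique: assumes "X \<in> Ob C" "Y \<in> Ob C" "a \<in> Hom C X Y" "b \<in> Hom C X Y" "madd C a b = zm C X Y"
  shows "b = mneg C a"
proof -
  have n: "mneg C a \<in> Hom C X Y" using negH assms by blast
  have "b = madd C b (madd C a (mneg C a))" using assms add_neg[of X Y a] add_zr[of X Y b] by simp
  also have "\<dots> = madd C (madd C b a) (mneg C a)" using assms n add_assoc[of X Y b a "mneg C a"] by simp
  also have "\<dots> = madd C (madd C a b) (mneg C a)" using assms add_comm[of X Y a b] by simp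
  also have "\<dots> = mneg C a" using assms n add_zl[of X Y "mneg C a"] by simp
  finally show ?thesis .
qed

lemma cancel_eq: assumes "X \<in> Ob C" "Y \<in> Ob C" "a \<in> Hom C X Y" "b \<in> Hom C X Y" "madd C a (mneg C b) = zm C X Y"
  shows "a = b"
proof -
  have n: "mneg C b \<in> Hom C X Y" using negH assms by blast
  have "madd C (mneg C b) a = zm C X Y" using assms n add_comm by metis
  hence "a = mneg C (mneg C b)" using neg_unique[of X Y "mneg C b" a] assms n by blast
  moreover have "mneg C (mneg C b) = b"
    using neg_unique[of X Y "mneg C b" b] assms n add_neg[of X Y b] add_comm[of X Y b "mneg C b"] by simp
  ultimately show ?thesis by simp
qed

lemma cmp_zr: assumes "X \<in> Ob C" "Y \<in> Ob C" "Z \<in> Ob C" "g \<in> Hom C Y Z"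
  shows "cmp C g (zm C X Y) = zm C X Z"
proof -
  have "madd C (zm C X Y) (zm C X Y) = zm C X Y" using assms add_zr by simp
  hence "cmp C g (zm C X Y) = madd C (cmp C g (zm C X Y)) (cmp C g (zm C X Y))"
    using distr[of X Y Z "zm C X Y" "zm C X Y" g] assms by simp
  thus ?thesis using idem_zero assms cmpH zmH by metis
qed

lemma cmp_zl: assumes "X \<in> Ob C" "Y \<in> Ob C" "Z \<in> Ob C" "f \<in> Hom C X Y"
  shows "cmp C (zm C Y Z) f = zm C X Z"
proof -
  have "madd C (zm C Y Z) (zm C Y Z) = zm C Y Z" using assms add_zr by simp
  hence "cmp C (zm C Y Z) f = madd C (cmp C (zm C Y Z) f) (cmp C (zm C Y Z) f)"
    using distl[of X Y Z f "zm C Y Z" "zm C Y Z"] assms by simp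
  thus ?thesis using idem_zero assms cmpH zmH by metis
qed

lemma cmp_negl: assumes "X \<in> Ob C" "Y \<in> Ob C" "Z \<in> Ob C" "f \<in> Hom C X Y" "g \<in> Hom C Y Z"
  shows "cmp C (mneg C g) f = mneg C (cmp C g f)"
proof -
  have "madd C (cmp C g f) (cmp C (mneg C g) f) = cmp C (madd C g (mneg C g)) f"
    using distl assms negH by metis
  also have "\<dots> = zm C X Z" using assms add_neg cmp_zl by simp
  finally show ?thesis using neg_unique assms cmpH negH by metis
qed

lemma cmp_negr: assumes "X \<in> Ob C" "Y \<in> Ob C" "Z \<in> Ob C" "f \<in> Hom C X Y" "g \<in> Hom C Y Z"
  shows "cmp C g (mneg C f) = mneg C (cmp C g f)"
proof -
  have "madd C (cmp C g f) (cmp C g (mneg C f)) = cmp C g (madd C f (mneg C f))"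
    using distr assms negH by metis
  also have "\<dots> = zm C X Z" using assms add_neg cmp_zr by simp
  finally show ?thesis using neg_unique assms cmpH negH by metis
qed

lemma neg_neg: assumes "X \<in> Ob C" "Y \<in> Ob C" "f \<in> Hom C X Y" shows "mneg C (mneg C f) = f"
  using neg_unique[of X Y "mneg C f" f] assms add_neg add_comm negH by metis

lemma neg_zero: assumes "X \<in> Ob C" "Y \<in> Ob C" shows "mneg C (zm C X Y) = zm C X Y"
  using neg_unique[of X Y "zm C X Y" "zm C X Y"] assms add_zr by simp


lemma triparts: "additive_cat C \<and> shift_auto C \<and>
    (\<forall>T \<in> Tri C. is_tri_shape C T) \<and>
    (\<forall>T \<in> Tri C. \<forall>T'. is_tri_shape C T' \<longrightarrow>
       (\<exists>a b c. tri_mor C T T' a b c \<and>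
          is_iso C a (fst T) (fst T') \<and> is_iso C b (fst (snd T)) (fst (snd T')) \<and>
          is_iso C c (fst (snd (snd T))) (fst (snd (snd T')))) \<longrightarrow> T' \<in> Tri C) \<and>
    (\<forall>X \<in> Ob C. \<forall>Z. is_zero_obj C Z \<longrightarrow>
       (X, X, Z, idm C X, zm C X Z, zm C Z (sh C X)) \<in> Tri C) \<and>
    (\<forall>X \<in> Ob C. \<forall>Y \<in> Ob C. \<forall>f \<in> Hom C X Y. \<exists>Z g h. (X, Y, Z, f, g, h) \<in> Tri C) \<and>
    (\<forall>X Y Z f g h. is_tri_shape C (X, Y, Z, f, g, h) \<longrightarrow>
       ((X, Y, Z, f, g, h) \<in> Tri C \<longleftrightarrow> (Y, Z, sh C X, g, h, mneg C (shm C f)) \<in> Tri C)) \<and>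
    (\<forall>T \<in> Tri C. \<forall>T' \<in> Tri C. \<forall>a b.
       (case T of (X,Y,Z,f,g,h) \<Rightarrow> case T' of (X',Y',Z',f',g',h') \<Rightarrow>
          a \<in> Hom C X X' \<and> b \<in> Hom C Y Y' \<and> cmp C b f = cmp C f' a) \<longrightarrow>
       (\<exists>c. tri_mor C T T' a b c)) \<and>
    (\<forall>X Y Z Z' X' Y' f g i i' k k' l l'.
       (X, Y, Z', f, i, i') \<in> Tri C \<longrightarrow> (Y, Z, X', g, k, k') \<in> Tri C \<longrightarrow>
       (X, Z, Y', cmp C g f, l, l') \<in> Tri C \<longrightarrow>
       (\<exists>u v. (Z', Y', X', u, v, cmp C (shm C i) k') \<in> Tri C \<and>
          cmp C u i = cmp C l g \<and> cmp C l' u = i' \<and>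
          cmp C v l = k \<and> cmp C k' v = cmp C (shm C f) l'))"
  using tri unfolding triangulated_def by assumption
lemmas tp = triparts[THEN conjunct2, THEN conjunct2]
lemma shauto: "shift_auto C" using triparts by (rule conjunct2[THEN conjunct1])
lemma shOb[simp]: "X \<in> Ob C \<Longrightarrow> sh C X \<in> Ob C"
  using shauto unfolding shift_auto_def bij_betw_def by blast
lemma sh_img: "sh C ` Ob C = Ob C" using shauto unfolding shift_auto_def bij_betw_def by (elim conjE)
lemma sh_surj: "Y \<in> Ob C \<Longrightarrow> \<exists>X\<in>Ob C. sh C X = Y"
  using sh_img by (metis imageE)
lemma sh_inj: "X \<in> Ob C \<Longrightarrow> Y \<in> Ob C \<Longrightarrow> sh C X = sh C Y \<Longrightarrow> X = Y"
  using shauto unfolding shift_auto_def bij_betw_def inj_on_def by blast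
lemma shmH: "X \<in> Ob C \<Longrightarrow> Y \<in> Ob C \<Longrightarrow> f \<in> Hom C X Y \<Longrightarrow> shm C f \<in> Hom C (sh C X) (sh C Y)"
  using shauto unfolding shift_auto_def bij_betw_def by blast
lemma shm_img: "X \<in> Ob C \<Longrightarrow> Y \<in> Ob C \<Longrightarrow> shm C ` Hom C X Y = Hom C (sh C X) (sh C Y)"
  using shauto unfolding shift_auto_def bij_betw_def by (elim conjE; simp)
lemma shm_surj: "X \<in> Ob C \<Longrightarrow> Y \<in> Ob C \<Longrightarrow> g \<in> Hom C (sh C X) (sh C Y) \<Longrightarrow> \<exists>f\<in>Hom C X Y. shm C f = g"
  using shm_img by (metis imageE)
lemma shm_inj: "X \<in> Ob C \<Longrightarrow> Y \<in> Ob C \<Longrightarrow> f \<in> Hom C X Y \<Longrightarrow> f' \<in> Hom C X Y \<Longrightarrow> shm C f = shm C f' \<Longrightarrow> f = f'"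
  using shauto unfolding shift_auto_def bij_betw_def inj_on_def by (elim conjE; blast)
lemma shm_id: "X \<in> Ob C \<Longrightarrow> shm C (idm C X) = idm C (sh C X)"
  using shauto unfolding shift_auto_def by blast
lemma shm_cmp: "\<lbrakk>X \<in> Ob C; Y \<in> Ob C; Z \<in> Ob C; f \<in> Hom C X Y; g \<in> Hom C Y Z\<rbrakk> \<Longrightarrow>
   shm C (cmp C g f) = cmp C (shm C g) (shm C f)"
  using shauto unfolding shift_auto_def by (elim conjE; simp)
lemma shm_add: "\<lbrakk>X \<in> Ob C; Y \<in> Ob C; f \<in> Hom C X Y; g \<in> Hom C X Y\<rbrakk> \<Longrightarrow>
   shm C (madd C f g) = madd C (shm C f) (shm C g)"
  using shauto unfolding shift_auto_def by (elim conjE; simp)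
lemma shm_zero: assumes "X \<in> Ob C" "Y \<in> Ob C" shows "shm C (zm C X Y) = zm C (sh C X) (sh C Y)"
proof -
  have "shm C (zm C X Y) = madd C (shm C (zm C X Y)) (shm C (zm C X Y))"
    using shm_add[of X Y "zm C X Y" "zm C X Y"] assms add_zr by simp
  thus ?thesis using idem_zero assms shmH zmH shOb by metis
qed
lemma shm_neg: assumes "X \<in> Ob C" "Y \<in> Ob C" "f \<in> Hom C X Y" shows "shm C (mneg C f) = mneg C (shm C f)"
proof -
  have "madd C (shm C f) (shm C (mneg C f)) = zm C (sh C X) (sh C Y)"
    using shm_add[of X Y f "mneg C f"] assms negH add_neg shm_zero by simp
  thus ?thesis using neg_unique assms shmH negH shOb by metis
qed

lemma addc: "additive_cat C" using triparts by (rule conjunct1)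
lemma zero_ex: "\<exists>Z. is_zero_obj C Z" using addc unfolding additive_cat_def by blast
lemma dsum_ex: "X \<in> Ob C \<Longrightarrow> Y \<in> Ob C \<Longrightarrow> \<exists>S. is_dsum C X Y S" using addc unfolding additive_cat_def by blast
lemma zeroOb: "is_zero_obj C Z \<Longrightarrow> Z \<in> Ob C" unfolding is_zero_obj_def by blast
lemma zero_out: "is_zero_obj C Z \<Longrightarrow> X \<in> Ob C \<Longrightarrow> f \<in> Hom C Z X \<Longrightarrow> f = zm C Z X"
  unfolding is_zero_obj_def by blast
lemma zero_in: "is_zero_obj C Z \<Longrightarrow> X \<in> Ob C \<Longrightarrow> f \<in> Hom C X Z \<Longrightarrow> f = zm C X Z"
  unfolding is_zero_obj_def by blast
lemma zero_id: "is_zero_obj C Z \<Longrightarrow> idm C Z = zm C Z Z"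
  using zero_out zeroOb idm by blast
lemma zero_sh: assumes "is_zero_obj C Z" shows "is_zero_obj C (sh C Z)"
proof -
  have Z: "Z \<in> Ob C" using zeroOb assms by blast
  { fix X assume X: "X \<in> Ob C"
    then obtain X' where X': "X' \<in> Ob C" "sh C X' = X" using sh_surj by blast
    have "Hom C (sh C Z) X = {zm C (sh C Z) X}"
    proof
      show "Hom C (sh C Z) X \<subseteq> {zm C (sh C Z) X}"
      proof
        fix g assume "g \<in> Hom C (sh C Z) X"
        then obtain f where "f \<in> Hom C Z X'" "shm C f = g" using shm_surj X' Z by blast
        hence "f = zm C Z X'" using zero_out assms X' by blast
        thus "g \<in> {zm C (sh C Z) X}" using shm_zero Z X' \<open>shm C f = g\<close> by simp
      qed
      show "{zm C (sh C Z) X} \<subseteq> Hom C (sh C Z) X" using X Z by simp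
    qed
    moreover have "Hom C X (sh C Z) = {zm C X (sh C Z)}"
    proof
      show "Hom C X (sh C Z) \<subseteq> {zm C X (sh C Z)}"
      proof
        fix g assume "g \<in> Hom C X (sh C Z)"
        then obtain f where "f \<in> Hom C X' Z" "shm C f = g" using shm_surj X' Z by blast
        hence "f = zm C X' Z" using zero_in assms X' by blast
        thus "g \<in> {zm C X (sh C Z)}" using shm_zero Z X' \<open>shm C f = g\<close> by simp
      qed
      show "{zm C X (sh C Z)} \<subseteq> Hom C X (sh C Z)" using X Z by simp
    qed
    ultimately have "Hom C (sh C Z) X = {zm C (sh C Z) X} \<and> Hom C X (sh C Z) = {zm C X (sh C Z)}" by blast }
  thus ?thesis unfolding is_zero_obj_def using Z by simp
qed

lemma tri_shape: "(X,Y,Z,f,g,h) \<in> Tri C \<Longrightarrow> X \<in> Ob C \<and> Y \<in> Ob C \<and> Z \<in> Ob C \<and> f \<in> Hom C X Y \<and> g \<in> Hom C Y Z \<and> h \<in> Hom C Z (sh C X)"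
  using tp[THEN conjunct1] unfolding is_tri_shape_def by fastforce

lemma rot: assumes "(X,Y,Z,f,g,h) \<in> Tri C" shows "(Y,Z,sh C X,g,h,mneg C (shm C f)) \<in> Tri C"
proof -
  have "is_tri_shape C (X,Y,Z,f,g,h)" using tri_shape[OF assms] unfolding is_tri_shape_def by simp
  thus ?thesis using tp[THEN conjunct2, THEN conjunct2, THEN conjunct2, THEN conjunct2, THEN conjunct1] assms by blast
qed

lemma unrot_gen: assumes "is_tri_shape C (X,Y,Z,f,g,h)" "(Y,Z,sh C X,g,h,mneg C (shm C f)) \<in> Tri C"
  shows "(X,Y,Z,f,g,h) \<in> Tri C"
  using tp[THEN conjunct2, THEN conjunct2, THEN conjunct2, THEN conjunct2, THEN conjunct1] assms by blast

lemma unrot: assumes "(A,B,D,a,b,c) \<in> Tri C"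
  shows "\<exists>X f. X \<in> Ob C \<and> sh C X = D \<and> f \<in> Hom C X A \<and> mneg C (shm C f) = c \<and> (X,A,B,f,a,b) \<in> Tri C"
proof -
  have s: "A \<in> Ob C" "B \<in> Ob C" "D \<in> Ob C" "a \<in> Hom C A B" "b \<in> Hom C B D" "c \<in> Hom C D (sh C A)"
    using tri_shape[OF assms] by auto
  obtain X where X: "X \<in> Ob C" "sh C X = D" using sh_surj s by blast
  have "mneg C c \<in> Hom C (sh C X) (sh C A)" using negH s X by simp
  then obtain f where f: "f \<in> Hom C X A" "shm C f = mneg C c" using shm_surj X s by blast
  have fc: "mneg C (shm C f) = c" using f(2) neg_neg[of D "sh C A" c] s X by simp
  have "is_tri_shape C (X,A,B,f,a,b)" unfolding is_tri_shape_def using X s f by simp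
  hence "(X,A,B,f,a,b) \<in> Tri C" using unrot_gen assms fc X by simp
  thus ?thesis using X f fc by blast
qed

lemma cone_ex: "X \<in> Ob C \<Longrightarrow> Y \<in> Ob C \<Longrightarrow> f \<in> Hom C X Y \<Longrightarrow> \<exists>Z g h. (X,Y,Z,f,g,h) \<in> Tri C"
  using tp[THEN conjunct2, THEN conjunct2, THEN conjunct2, THEN conjunct1] by blast

lemma tri_id: "X \<in> Ob C \<Longrightarrow> is_zero_obj C Z \<Longrightarrow> (X, X, Z, idm C X, zm C X Z, zm C Z (sh C X)) \<in> Tri C"
  using tp[THEN conjunct2, THEN conjunct2, THEN conjunct1] by blast

lemma TR3: assumes "(X,Y,Z,f,g,h) \<in> Tri C" "(X',Y',Z',f',g',h') \<in> Tri C" "a \<in> Hom C X X'" "b \<in> Hom C Y Y'"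
  "cmp C b f = cmp C f' a"
  shows "\<exists>c \<in> Hom C Z Z'. cmp C c g = cmp C g' b \<and> cmp C (shm C a) h = cmp C h' c"
proof -
  have "\<exists>c. tri_mor C (X,Y,Z,f,g,h) (X',Y',Z',f',g',h') a b c"
    using tp[THEN conjunct2, THEN conjunct2, THEN conjunct2, THEN conjunct2, THEN conjunct2, THEN conjunct1] assms by fastforce
  thus ?thesis unfolding tri_mor_def by auto
qed

lemma TR4: "(X, Y, Z', f, i, i') \<in> Tri C \<Longrightarrow> (Y, Z, X', g, k, k') \<in> Tri C \<Longrightarrow>
       (X, Z, Y', cmp C g f, l, l') \<in> Tri C \<Longrightarrow>
       (\<exists>u v. (Z', Y', X', u, v, cmp C (shm C i) k') \<in> Tri C \<and>
          cmp C u i = cmp C l g \<and> cmp C l' u = i' \<and>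
          cmp C v l = k \<and> cmp C k' v = cmp C (shm C f) l')"
  using tp[THEN conjunct2, THEN conjunct2, THEN conjunct2, THEN conjunct2, THEN conjunct2, THEN conjunct2] by blast

lemma TR1iso: assumes "T \<in> Tri C" "is_tri_shape C T'" "tri_mor C T T' a b c"
  "is_iso C a (fst T) (fst T')" "is_iso C b (fst (snd T)) (fst (snd T'))" "is_iso C c (fst (snd (snd T))) (fst (snd (snd T')))"
  shows "T' \<in> Tri C"
  using tp[THEN conjunct2, THEN conjunct1] assms by blast


lemma tri_gf: assumes T: "(X,Y,Z,f,g,h) \<in> Tri C" shows "cmp C g f = zm C X Z"
proof -
  have s: "X \<in> Ob C" "Y \<in> Ob C" "Z \<in> Ob C" "f \<in> Hom C X Y" "g \<in> Hom C Y Z" "h \<in> Hom C Z (sh C X)"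
    using tri_shape[OF T] by auto
  obtain Z0 where Z0: "is_zero_obj C Z0" using zero_ex by blast
  have Z0o: "Z0 \<in> Ob C" using zeroOb Z0 by blast
  have T0: "(X, X, Z0, idm C X, zm C X Z0, zm C Z0 (sh C X)) \<in> Tri C" using tri_id s Z0 by blast
  obtain c where c: "c \<in> Hom C Z0 Z" "cmp C c (zm C X Z0) = cmp C g f"
    using TR3[OF T0 T, of "idm C X" f] s by auto
  thus ?thesis using cmp_zr[of X Z0 Z c] s Z0o by simp
qed

lemma tri_hg: assumes T: "(X,Y,Z,f,g,h) \<in> Tri C" shows "cmp C h g = zm C Y (sh C X)"
  using tri_gf[OF rot[OF T]] .

lemma tri_fh: assumes T: "(X,Y,Z,f,g,h) \<in> Tri C" shows "cmp C (shm C f) h = zm C Z (sh C Y)"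
proof -
  have s: "X \<in> Ob C" "Y \<in> Ob C" "Z \<in> Ob C" "f \<in> Hom C X Y" "g \<in> Hom C Y Z" "h \<in> Hom C Z (sh C X)"
    using tri_shape[OF T] by auto
  have "cmp C (mneg C (shm C f)) h = zm C Z (sh C Y)" using tri_gf[OF rot[OF rot[OF T]]] .
  hence "mneg C (cmp C (shm C f) h) = zm C Z (sh C Y)" using cmp_negl[of Z "sh C X" "sh C Y" h "shm C f"] s shmH by simp
  hence "mneg C (mneg C (cmp C (shm C f) h)) = zm C Z (sh C Y)" using neg_zero s by simp
  thus ?thesis using neg_neg s cmpH shmH shOb by metis
qed

lemma lift: assumes T: "(X,Y,Z,f,g,h) \<in> Tri C" and W: "W \<in> Ob C" and u: "u \<in> Hom C W Y"
  and gu: "cmp C g u = zm C W Z" shows "\<exists>a\<in>Hom C W X. cmp C f a = u"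
proof -
  have s: "X \<in> Ob C" "Y \<in> Ob C" "Z \<in> Ob C" "f \<in> Hom C X Y" "g \<in> Hom C Y Z" "h \<in> Hom C Z (sh C X)"
    using tri_shape[OF T] by auto
  obtain Z0 where Z0: "is_zero_obj C Z0" using zero_ex by blast
  have Z0o: "Z0 \<in> Ob C" using zeroOb Z0 by blast
  have T1: "(W, Z0, sh C W, zm C W Z0, zm C Z0 (sh C W), mneg C (shm C (idm C W))) \<in> Tri C"
    using rot[OF tri_id[OF W Z0]] .
  have cond: "cmp C (zm C Z0 Z) (zm C W Z0) = cmp C g u" using gu cmp_zl[of W Z0 Z "zm C W Z0"] W Z0o s by simp
  obtain c where c: "c \<in> Hom C (sh C W) (sh C X)"
     "cmp C (shm C u) (mneg C (shm C (idm C W))) = cmp C (mneg C (shm C f)) c"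
    using TR3[OF T1 rot[OF T] u _ cond] s Z0o by auto
  have sf: "shm C f \<in> Hom C (sh C X) (sh C Y)" using shmH s by blast
  have su: "shm C u \<in> Hom C (sh C W) (sh C Y)" using shmH s u W by blast
  have "cmp C (shm C u) (mneg C (shm C (idm C W))) = mneg C (shm C u)"
    using shm_id[OF W] cmp_negr[of "sh C W" "sh C W" "sh C Y" "idm C (sh C W)" "shm C u"] su W s idr[of "sh C W" "sh C Y" "shm C u"] by simp
  moreover have "cmp C (mneg C (shm C f)) c = mneg C (cmp C (shm C f) c)"
    using cmp_negl[of "sh C W" "sh C X" "sh C Y" c "shm C f"] c sf W s by simp
  ultimately have "mneg C (shm C u) = mneg C (cmp C (shm C f) c)" using c by simp
  hence e: "shm C u = cmp C (shm C f) c" using neg_neg su sf c cmpH shOb W s by metis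
  obtain a where a: "a \<in> Hom C W X" "shm C a = c" using shm_surj W s c by blast
  have "shm C (cmp C f a) = cmp C (shm C f) c" using shm_cmp[of W X Y a f] a W s by simp
  hence "shm C u = shm C (cmp C f a)" using e by simp
  hence "u = cmp C f a" using shm_inj[of W Y u "cmp C f a"] u a cmpH W s by blast
  thus ?thesis using a by blast
qed

lemma extend: assumes T: "(X,Y,Z,f,g,h) \<in> Tri C" and W: "W \<in> Ob C" and u: "u \<in> Hom C Y W"
  and uf: "cmp C u f = zm C X W" shows "\<exists>c\<in>Hom C Z W. cmp C c g = u"
proof -
  have s: "X \<in> Ob C" "Y \<in> Ob C" "Z \<in> Ob C" "f \<in> Hom C X Y" "g \<in> Hom C Y Z" "h \<in> Hom C Z (sh C X)"
    using tri_shape[OF T] by auto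
  obtain Z0 where Z0: "is_zero_obj C Z0" using zero_ex by blast
  have Z0o: "Z0 \<in> Ob C" using zeroOb Z0 by blast
  obtain W' where W': "W' \<in> Ob C" "sh C W' = W" using sh_surj W by blast
  have T1: "(Z0, W, W, zm C Z0 W, mneg C (idm C W), mneg C (shm C (zm C W' Z0))) \<in> Tri C"
    using rot[OF rot[OF tri_id[OF W'(1) Z0]]] shm_id[OF W'(1)] W' by simp
  have e1: "mneg C (shm C (zm C W' Z0)) = zm C W (sh C Z0)" using shm_zero[of W' Z0] W' Z0o neg_zero[of W "sh C Z0"] W by simp
  have T1': "(Z0, W, W, zm C Z0 W, mneg C (idm C W), zm C W (sh C Z0)) \<in> Tri C" using T1 e1 by simp
  have nu: "mneg C u \<in> Hom C Y W" using negH u s W by blast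
  have cond: "cmp C (mneg C u) f = cmp C (zm C Z0 W) (zm C X Z0)"
    using cmp_negl[of X Y W f u] uf neg_zero cmp_zl[of X Z0 W "zm C X Z0"] s W Z0o u by simp
  obtain c where c: "c \<in> Hom C Z W" "cmp C c g = cmp C (mneg C (idm C W)) (mneg C u)"
    using TR3[OF T T1' _ nu cond] s Z0o by auto
  have "cmp C (mneg C (idm C W)) (mneg C u) = u"
    using cmp_negl[of Y W W "mneg C u" "idm C W"] idl[of Y W "mneg C u"] neg_neg[of Y W u] nu u s W by simp
  thus ?thesis using c by auto
qed


lemma iso_id: "X \<in> Ob C \<Longrightarrow> is_iso C (idm C X) X X"
  unfolding is_iso_def using idm idl by fastforce

lemma mono_tri: assumes T: "(X,Y,Z,f,g,zm C Z (sh C X)) \<in> Tri C" and W: "W \<in> Ob C"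
  and x: "x \<in> Hom C W X" and y: "y \<in> Hom C W X" and e: "cmp C f x = cmp C f y" shows "x = y"
proof -
  have s: "X \<in> Ob C" "Y \<in> Ob C" "Z \<in> Ob C" "f \<in> Hom C X Y" "g \<in> Hom C Y Z"
    using tri_shape[OF T] by auto
  obtain X0 f0 where U: "X0 \<in> Ob C" "sh C X0 = Z" "f0 \<in> Hom C X0 X" "mneg C (shm C f0) = zm C Z (sh C X)"
     "(X0, X, Y, f0, f, g) \<in> Tri C" using unrot[OF T] by blast
  have sf0: "shm C f0 \<in> Hom C Z (sh C X)" using shmH[OF U(1) s(1) U(3)] U(2) by simp
  have "shm C f0 = mneg C (mneg C (shm C f0))" using neg_neg[of Z "sh C X" "shm C f0"] sf0 s by simp
  hence "shm C f0 = zm C Z (sh C X)" using U(4) neg_zero[of Z "sh C X"] s by simp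
  hence "shm C f0 = shm C (zm C X0 X)" using shm_zero[OF U(1) s(1)] U(2) by simp
  hence f0: "f0 = zm C X0 X" using shm_inj[OF U(1) s(1) U(3)] U(1) s by simp
  let ?d = "madd C x (mneg C y)"
  have d: "?d \<in> Hom C W X" using addH negH W s x y by simp
  have "cmp C f ?d = madd C (cmp C f x) (cmp C f (mneg C y))" using distr[of W X Y x "mneg C y" f] W s x y negH by simp
  also have "\<dots> = madd C (cmp C f y) (mneg C (cmp C f y))" using cmp_negr[of W X Y y f] W s y e by simp
  also have "\<dots> = zm C W Y" using add_neg cmpH W s y by simp
  finally obtain a where a: "a \<in> Hom C W X0" "cmp C f0 a = ?d" using lift[OF U(5) W d] by blast
  hence "?d = zm C W X" using f0 cmp_zl[of W X0 X a] W U s by simp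
  thus ?thesis using cancel_eq W s x y by blast
qed

lemma tri_split: assumes T: "(X,Y,Z,f,g,zm C Z (sh C X)) \<in> Tri C" shows "is_dsum C X Z Y"
proof -
  have s: "X \<in> Ob C" "Y \<in> Ob C" "Z \<in> Ob C" "f \<in> Hom C X Y" "g \<in> Hom C Y Z"
    using tri_shape[OF T] by auto
  have gf: "cmp C g f = zm C X Z" using tri_gf[OF T] .
  have c0: "cmp C (zm C Z (sh C X)) (idm C Z) = zm C Z (sh C X)" using idr[of Z "sh C X" "zm C Z (sh C X)"] s by simp
  obtain t where t: "t \<in> Hom C Z Y" "cmp C g t = idm C Z" using lift[OF rot[OF T] s(3) idm[OF s(3)] c0] by blast
  have tg: "cmp C t g \<in> Hom C Y Y" using cmpH s t by blast
  let ?u = "madd C (idm C Y) (mneg C (cmp C t g))"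
  have u: "?u \<in> Hom C Y Y" using addH negH tg s by simp
  have gtg: "cmp C g (cmp C t g) = g" using assoc[of Y Z Y Z g t g] s t idl by simp
  have "cmp C g ?u = madd C (cmp C g (idm C Y)) (cmp C g (mneg C (cmp C t g)))"
    using distr[of Y Y Z "idm C Y" "mneg C (cmp C t g)" g] s tg negH by simp
  also have "\<dots> = madd C g (mneg C g)" using cmp_negr[of Y Y Z "cmp C t g" g] s tg gtg idr by simp
  also have "\<dots> = zm C Y Z" using add_neg s by simp
  finally obtain r where r: "r \<in> Hom C Y X" "cmp C f r = ?u" using lift[OF T s(2) u] by blast
  have ug: "cmp C ?u f = f"
  proof -
    have "cmp C ?u f = madd C (cmp C (idm C Y) f) (cmp C (mneg C (cmp C t g)) f)"
      using distl[of X Y Y f "idm C Y" "mneg C (cmp C t g)"] s tg negH by simp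
    also have "\<dots> = madd C f (mneg C (cmp C (cmp C t g) f))" using cmp_negl[of X Y Y f "cmp C t g"] s tg idl by simp
    also have "cmp C (cmp C t g) f = cmp C t (cmp C g f)" using assoc[of X Y Z Y f g t] s t by simp
    also have "\<dots> = zm C X Y" using gf cmp_zr[of X Z Y t] s t by simp
    finally show ?thesis using neg_zero add_zr s by simp
  qed
  have rf: "cmp C r f = idm C X"
  proof (rule mono_tri[OF T s(1)])
    show "cmp C r f \<in> Hom C X X" using cmpH s r by blast
    show "idm C X \<in> Hom C X X" using s by simp
    have "cmp C f (cmp C r f) = cmp C (cmp C f r) f" using assoc[of X Y X Y f r f] s r by simp
    thus "cmp C f (cmp C r f) = cmp C f (idm C X)" using r ug idr s by simp
  qed
  have rt: "cmp C r t = zm C Z X"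
  proof (rule mono_tri[OF T s(3)])
    show "cmp C r t \<in> Hom C Z X" using cmpH s r t by blast
    show "zm C Z X \<in> Hom C Z X" using s by simp
    have "cmp C f (cmp C r t) = cmp C ?u t" using assoc[of Z Y X Y t r f] s r t by simp
    also have "\<dots> = madd C (cmp C (idm C Y) t) (cmp C (mneg C (cmp C t g)) t)"
      using distl[of Z Y Y t "idm C Y" "mneg C (cmp C t g)"] s t tg negH by simp
    also have "\<dots> = madd C t (mneg C (cmp C (cmp C t g) t))" using cmp_negl[of Z Y Y t "cmp C t g"] s t tg idl by simp
    also have "cmp C (cmp C t g) t = t" using assoc[of Z Y Z Y t g t] s t idr by simp
    finally have "cmp C f (cmp C r t) = zm C Z Y" using add_neg s t by simp
    thus "cmp C f (cmp C r t) = cmp C f (zm C Z X)" using cmp_zr s by simp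
  qed
  have sum: "madd C (cmp C f r) (cmp C t g) = idm C Y"
    using r add_assoc[of Y Y "idm C Y" "mneg C (cmp C t g)" "cmp C t g"] s tg negH
       add_neg[of Y Y "cmp C t g"] add_comm[of Y Y "mneg C (cmp C t g)" "cmp C t g"] add_zr by simp
  show ?thesis unfolding is_dsum_def
    using s r t rf rt gf sum by blast
qed

definition dsd where "dsd X Y S p1 p2 i1 i2 \<longleftrightarrow> X \<in> Ob C \<and> Y \<in> Ob C \<and> S \<in> Ob C \<and>
  p1 \<in> Hom C S X \<and> p2 \<in> Hom C S Y \<and> i1 \<in> Hom C X S \<and> i2 \<in> Hom C Y S \<and>
        cmp C p1 i1 = idm C X \<and> cmp C p2 i2 = idm C Y \<and>
        cmp C p1 i2 = zm C Y X \<and> cmp C p2 i1 = zm C X Y \<and>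
        madd C (cmp C i1 p1) (cmp C i2 p2) = idm C S"

lemma dsum_iff: "is_dsum C X Y S \<longleftrightarrow> (\<exists>p1 p2 i1 i2. dsd X Y S p1 p2 i1 i2)"
  unfolding is_dsum_def dsd_def by blast

lemma split_tri_d: assumes D: "dsd X Y S p1 p2 i1 i2"
  shows "(X, S, Y, i1, p2, zm C Y (sh C X)) \<in> Tri C"
proof -
  have s: "X \<in> Ob C" "Y \<in> Ob C" "S \<in> Ob C" "p1 \<in> Hom C S X" "p2 \<in> Hom C S Y"
    "i1 \<in> Hom C X S" "i2 \<in> Hom C Y S" and e: "cmp C p1 i1 = idm C X" "cmp C p2 i2 = idm C Y"
    "cmp C p1 i2 = zm C Y X" "cmp C p2 i1 = zm C X Y" "madd C (cmp C i1 p1) (cmp C i2 p2) = idm C S"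
    using D unfolding dsd_def by auto
  obtain Z g h where T: "(X,S,Z,i1,g,h) \<in> Tri C" using cone_ex s by blast
  have sz: "Z \<in> Ob C" "g \<in> Hom C S Z" "h \<in> Hom C Z (sh C X)" using tri_shape[OF T] by auto
  have h0: "h = zm C Z (sh C X)"
  proof -
    have "cmp C (shm C p1) (cmp C (shm C i1) h) = cmp C (shm C p1) (zm C Z (sh C S))"
      using tri_fh[OF T] by simp
    also have "\<dots> = zm C Z (sh C X)" using cmp_zr shmH s sz by simp
    finally have "cmp C (cmp C (shm C p1) (shm C i1)) h = zm C Z (sh C X)"
      using assoc[of Z "sh C X" "sh C S" "sh C X" h "shm C i1" "shm C p1"] shmH s sz by simp
    moreover have "cmp C (shm C p1) (shm C i1) = idm C (sh C X)" using shm_cmp[of X S X i1 p1] e shm_id s by simp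
    ultimately show ?thesis using idl sz s by simp
  qed
  obtain c where c: "c \<in> Hom C Z Y" "cmp C c g = p2" using extend[OF T s(2) s(5) e(4)] by blast
  let ?t = "cmp C g i2"
  have t: "?t \<in> Hom C Y Z" using cmpH s sz by blast
  have ct: "cmp C c ?t = idm C Y" using assoc[of Y S Z Y i2 g c] s sz c e by simp
  have gi1: "cmp C g i1 = zm C X Z" using tri_gf[OF T] .
  have g_eq: "cmp C g (cmp C i2 p2) = g"
  proof -
    have "g = cmp C g (madd C (cmp C i1 p1) (cmp C i2 p2))" using e(5) idr sz s by simp
    also have "\<dots> = madd C (cmp C g (cmp C i1 p1)) (cmp C g (cmp C i2 p2))"
      using distr[of S S Z "cmp C i1 p1" "cmp C i2 p2" g] cmpH s sz by simp
    also have "cmp C g (cmp C i1 p1) = zm C S Z"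
      using assoc[of S X S Z p1 i1 g] gi1 cmp_zl[of S X Z p1] s sz by simp
    finally show ?thesis using add_zl cmpH s sz by metis
  qed
  have tc: "cmp C ?t c = idm C Z"
  proof -
    let ?v = "madd C (cmp C ?t c) (mneg C (idm C Z))"
    have tcH: "cmp C ?t c \<in> Hom C Z Z" using cmpH t c sz s by blast
    have v: "?v \<in> Hom C Z Z" using addH negH tcH sz by simp
    have "cmp C (cmp C ?t c) g = cmp C ?t p2" using assoc[of S Z Y Z g c ?t] sz s c t by simp
    also have "\<dots> = cmp C g (cmp C i2 p2)" using assoc[of S Y S Z p2 i2 g] sz s by simp
    finally have tcg: "cmp C (cmp C ?t c) g = g" using g_eq by simp
    have "cmp C ?v g = madd C (cmp C (cmp C ?t c) g) (cmp C (mneg C (idm C Z)) g)"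
      using distl[of S Z Z g "cmp C ?t c" "mneg C (idm C Z)"] tcH negH sz s by simp
    also have "\<dots> = zm C S Z" using tcg cmp_negl[of S Z Z g "idm C Z"] idl add_neg sz s by simp
    finally obtain d where d: "d \<in> Hom C (sh C X) Z" "cmp C d h = ?v" using extend[OF rot[OF T] sz(1) v] by blast
    hence "?v = zm C Z Z" using h0 cmp_zr[of Z "sh C X" Z d] sz s by simp
    thus ?thesis using cancel_eq tcH sz by simp
  qed
  have T': "is_tri_shape C (X, S, Y, i1, p2, zm C Y (sh C X))" unfolding is_tri_shape_def using s by simp
  have M: "tri_mor C (X,S,Z,i1,g,h) (X, S, Y, i1, p2, zm C Y (sh C X)) (idm C X) (idm C S) c"
    unfolding tri_mor_def using s c idl idr h0 shm_id cmp_zl[of Z Y "sh C X" c] sz by simp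
  have ic: "is_iso C c Z Y" unfolding is_iso_def using c t ct tc by blast
  show "(X, S, Y, i1, p2, zm C Y (sh C X)) \<in> Tri C"
    using TR1iso[OF T T' M] iso_id s ic by simp
qed

lemma split_tri: assumes D: "is_dsum C X Y S"
  shows "\<exists>i1 p2. i1 \<in> Hom C X S \<and> p2 \<in> Hom C S Y \<and> (X, S, Y, i1, p2, zm C Y (sh C X)) \<in> Tri C"
  using D split_tri_d unfolding dsum_iff dsd_def by blast


lemma dsumOb: "is_dsum C X Y S \<Longrightarrow> X \<in> Ob C \<and> Y \<in> Ob C \<and> S \<in> Ob C" unfolding is_dsum_def by blast

lemma dsum_comm: "is_dsum C X Y S \<Longrightarrow> is_dsum C Y X S"
  unfolding is_dsum_def by (metis add_comm cmpH)

lemma dsum_zero: assumes Z: "is_zero_obj C Z" and X: "X \<in> Ob C" shows "is_dsum C Z X X"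
proof -
  have Zo: "Z \<in> Ob C" using zeroOb Z by blast
  have "dsd Z X X (zm C X Z) (idm C X) (zm C Z X) (idm C X)"
    unfolding dsd_def using Zo X zero_id[OF Z] cmp_zl[of Z X Z "zm C Z X"] cmp_zl[of X Z X "zm C X Z"]
      idl[of Z X "zm C Z X"] idr[of X Z "zm C X Z"] add_zl[of X X "idm C X"] idl[of X X "idm C X"] by simp
  thus ?thesis using dsum_iff by blast
qed

lemma dsum_sh: assumes "is_dsum C X Y S" shows "is_dsum C (sh C X) (sh C Y) (sh C S)"
proof -
  obtain p1 p2 i1 i2 where d: "dsd X Y S p1 p2 i1 i2" using assms dsum_iff by blast
  hence s: "X \<in> Ob C" "Y \<in> Ob C" "S \<in> Ob C" "p1 \<in> Hom C S X" "p2 \<in> Hom C S Y"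
    "i1 \<in> Hom C X S" "i2 \<in> Hom C Y S" and e: "cmp C p1 i1 = idm C X" "cmp C p2 i2 = idm C Y"
    "cmp C p1 i2 = zm C Y X" "cmp C p2 i1 = zm C X Y" "madd C (cmp C i1 p1) (cmp C i2 p2) = idm C S"
    unfolding dsd_def by auto
  have "dsd (sh C X) (sh C Y) (sh C S) (shm C p1) (shm C p2) (shm C i1) (shm C i2)"
    unfolding dsd_def using s e shmH shm_cmp[of X S X i1 p1] shm_cmp[of Y S Y i2 p2] shm_cmp[of Y S X i2 p1]
      shm_cmp[of X S Y i1 p2] shm_cmp[of S X S p1 i1] shm_cmp[of S Y S p2 i2] shm_id shm_zero
      shm_add[of S S "cmp C i1 p1" "cmp C i2 p2"] cmpH by simp
  thus ?thesis using dsum_iff by blast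
qed

lemma ext_out: assumes d: "dsd X Y S p1 p2 i1 i2" and W: "W \<in> Ob C" and a: "a \<in> Hom C X W" and b: "b \<in> Hom C Y W"
  shows "\<exists>t \<in> Hom C S W. cmp C t i1 = a \<and> cmp C t i2 = b"
proof -
  have s: "X \<in> Ob C" "Y \<in> Ob C" "S \<in> Ob C" "p1 \<in> Hom C S X" "p2 \<in> Hom C S Y"
    "i1 \<in> Hom C X S" "i2 \<in> Hom C Y S" and e: "cmp C p1 i1 = idm C X" "cmp C p2 i2 = idm C Y"
    "cmp C p1 i2 = zm C Y X" "cmp C p2 i1 = zm C X Y" "madd C (cmp C i1 p1) (cmp C i2 p2) = idm C S"
    using d unfolding dsd_def by auto
  let ?t = "madd C (cmp C a p1) (cmp C b p2)"
  have t: "?t \<in> Hom C S W" using addH cmpH s W a b by meson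
  have "cmp C ?t i1 = madd C (cmp C (cmp C a p1) i1) (cmp C (cmp C b p2) i1)"
    using distl[of X S W i1 "cmp C a p1" "cmp C b p2"] cmpH s W a b by meson
  also have "\<dots> = a" using assoc[of X S X W i1 p1 a, symmetric] assoc[of X S Y W i1 p2 b, symmetric] e s W a b idr cmp_zr add_zr by simp
  finally have 1: "cmp C ?t i1 = a" .
  have "cmp C ?t i2 = madd C (cmp C (cmp C a p1) i2) (cmp C (cmp C b p2) i2)"
    using distl[of Y S W i2 "cmp C a p1" "cmp C b p2"] cmpH s W a b by meson
  also have "\<dots> = b" using assoc[of Y S X W i2 p1 a, symmetric] assoc[of Y S Y W i2 p2 b, symmetric] e s W a b idr cmp_zr add_zl by simp
  finally show ?thesis using 1 t by blast
qed

lemma ext_uniq: assumes d: "dsd X Y S p1 p2 i1 i2" and W: "W \<in> Ob C" and t: "t \<in> Hom C S W" and t': "t' \<in> Hom C S W"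
  and e1: "cmp C t i1 = cmp C t' i1" and e2: "cmp C t i2 = cmp C t' i2" shows "t = t'"
proof -
  have s: "X \<in> Ob C" "Y \<in> Ob C" "S \<in> Ob C" "p1 \<in> Hom C S X" "p2 \<in> Hom C S Y"
    "i1 \<in> Hom C X S" "i2 \<in> Hom C Y S" and e: "madd C (cmp C i1 p1) (cmp C i2 p2) = idm C S"
    using d unfolding dsd_def by auto
  have "\<And>u. u \<in> Hom C S W \<Longrightarrow> u = madd C (cmp C (cmp C u i1) p1) (cmp C (cmp C u i2) p2)"
  proof -
    fix u assume u: "u \<in> Hom C S W"
    have "u = cmp C u (madd C (cmp C i1 p1) (cmp C i2 p2))" using e idr u s W by simp
    also have "\<dots> = madd C (cmp C u (cmp C i1 p1)) (cmp C u (cmp C i2 p2))"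
      using distr[of S S W "cmp C i1 p1" "cmp C i2 p2" u] cmpH s u W by meson
    finally show "u = madd C (cmp C (cmp C u i1) p1) (cmp C (cmp C u i2) p2)"
      using assoc[of S X S W p1 i1 u] assoc[of S Y S W p2 i2 u] s u W by simp
  qed
  thus ?thesis using t t' e1 e2 by metis
qed

lemma iso_refl: "X \<in> Ob C \<Longrightarrow> isomorphic C X X" unfolding isomorphic_def using iso_id by blast
lemma iso_sym: "isomorphic C X Y \<Longrightarrow> isomorphic C Y X" unfolding isomorphic_def is_iso_def by blast
lemma iso_trans: assumes "isomorphic C X Y" "isomorphic C Y Z" shows "isomorphic C X Z"
proof -
  obtain f g where f: "f \<in> Hom C X Y" "g \<in> Hom C Y X" "cmp C g f = idm C X" "cmp C f g = idm C Y"
    and o: "X \<in> Ob C" "Y \<in> Ob C" "Z \<in> Ob C"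
    using assms unfolding isomorphic_def is_iso_def by blast
  obtain f' g' where f': "f' \<in> Hom C Y Z" "g' \<in> Hom C Z Y" "cmp C g' f' = idm C Y" "cmp C f' g' = idm C Z"
    using assms unfolding isomorphic_def is_iso_def by blast
  have 1: "cmp C (cmp C g g') (cmp C f' f) = idm C X"
    using assoc[of X Y Z X f f' "cmp C g g'"] assoc[of Y Z Y X f' g' g] f f' o idr idl cmpH by simp
  have 2: "cmp C (cmp C f' f) (cmp C g g') = idm C Z"
    using assoc[of Z X Y Z "cmp C g g'" f f'] assoc[of Z Y X Y g' g f] f f' o idr idl cmpH by simp
  show ?thesis unfolding isomorphic_def is_iso_def using o 1 2 f f' cmpH by meson
qed

lemma dsum_uniq: assumes "is_dsum C X Y S" "is_dsum C X Y S'" shows "isomorphic C S S'"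
proof -
  obtain p1 p2 i1 i2 where d: "dsd X Y S p1 p2 i1 i2" using assms dsum_iff by blast
  obtain q1 q2 j1 j2 where d': "dsd X Y S' q1 q2 j1 j2" using assms dsum_iff by blast
  have s: "X \<in> Ob C" "Y \<in> Ob C" "S \<in> Ob C" "S' \<in> Ob C" "i1 \<in> Hom C X S" "i2 \<in> Hom C Y S"
      "j1 \<in> Hom C X S'" "j2 \<in> Hom C Y S'" using d d' unfolding dsd_def by auto
  obtain f where f: "f \<in> Hom C S S'" "cmp C f i1 = j1" "cmp C f i2 = j2" using ext_out[OF d s(4) s(7) s(8)] by blast
  obtain g where g: "g \<in> Hom C S' S" "cmp C g j1 = i1" "cmp C g j2 = i2" using ext_out[OF d' s(3) s(5) s(6)] by blast
  have "cmp C g f = idm C S"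
    by (rule ext_uniq[OF d s(3)]) (use f g s assoc[of X S S' S i1 f g] assoc[of Y S S' S i2 f g] idl cmpH in auto)
  moreover have "cmp C f g = idm C S'"
    by (rule ext_uniq[OF d' s(4)]) (use f g s assoc[of X S' S S' j1 g f] assoc[of Y S' S S' j2 g f] idl cmpH in auto)
  ultimately show ?thesis unfolding isomorphic_def is_iso_def using f g s by blast
qed


lemma sw: assumes o: "A \<in> Ob C" "B \<in> Ob C" "C' \<in> Ob C" "D' \<in> Ob C" "E \<in> Ob C"
  and h: "g \<in> Hom C A B" "b \<in> Hom C B C'" "a \<in> Hom C C' D'" "f \<in> Hom C D' E"
  shows "cmp C (cmp C f a) (cmp C b g) = cmp C f (cmp C (cmp C a b) g)"
proof -
  have "cmp C (cmp C f a) (cmp C b g) = cmp C f (cmp C a (cmp C b g))"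
    using assoc[of A C' D' E "cmp C b g" a f] o h cmpH by metis
  also have "cmp C a (cmp C b g) = cmp C (cmp C a b) g" using assoc[of A B C' D' g b a] o h by simp
  finally show ?thesis .
qed

lemma dsum_isoS: assumes D: "is_dsum C X Y S" and I: "isomorphic C S S'" shows "is_dsum C X Y S'"
proof -
  obtain p1 p2 i1 i2 where d: "dsd X Y S p1 p2 i1 i2" using D dsum_iff by blast
  hence s: "X \<in> Ob C" "Y \<in> Ob C" "S \<in> Ob C" "p1 \<in> Hom C S X" "p2 \<in> Hom C S Y"
    "i1 \<in> Hom C X S" "i2 \<in> Hom C Y S" and e: "cmp C p1 i1 = idm C X" "cmp C p2 i2 = idm C Y"
    "cmp C p1 i2 = zm C Y X" "cmp C p2 i1 = zm C X Y" "madd C (cmp C i1 p1) (cmp C i2 p2) = idm C S"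
    unfolding dsd_def by auto
  obtain f g where f: "S' \<in> Ob C" "f \<in> Hom C S S'" "g \<in> Hom C S' S" "cmp C g f = idm C S" "cmp C f g = idm C S'"
    using I unfolding isomorphic_def is_iso_def by blast
  have m: "\<And>U V p i. U \<in> Ob C \<Longrightarrow> V \<in> Ob C \<Longrightarrow> p \<in> Hom C S U \<Longrightarrow> i \<in> Hom C V S \<Longrightarrow>
      cmp C (cmp C p g) (cmp C f i) = cmp C p i"
    using sw[of _ S S' S _ _ f g] f s idl by simp
  have n: "\<And>U p i. U \<in> Ob C \<Longrightarrow> p \<in> Hom C S U \<Longrightarrow> i \<in> Hom C U S \<Longrightarrow>
      cmp C (cmp C f i) (cmp C p g) = cmp C f (cmp C (cmp C i p) g)"
    using sw[of S' S _ S S' g _ _ f] f s by simp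
  have ip: "cmp C i1 p1 \<in> Hom C S S" "cmp C i2 p2 \<in> Hom C S S" using cmpH s by blast+
  have "madd C (cmp C (cmp C f i1) (cmp C p1 g)) (cmp C (cmp C f i2) (cmp C p2 g))
      = madd C (cmp C f (cmp C (cmp C i1 p1) g)) (cmp C f (cmp C (cmp C i2 p2) g))" using n s by simp
  also have "\<dots> = cmp C f (madd C (cmp C (cmp C i1 p1) g) (cmp C (cmp C i2 p2) g))"
    using distr[of S' S S' "cmp C (cmp C i1 p1) g" "cmp C (cmp C i2 p2) g" f] cmpH ip f s by metis
  also have "\<dots> = cmp C f (cmp C (madd C (cmp C i1 p1) (cmp C i2 p2)) g)"
    using distl[of S' S S g "cmp C i1 p1" "cmp C i2 p2"] ip f s by simp
  also have "\<dots> = idm C S'" using e f s idl by simp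
  finally have sum: "madd C (cmp C (cmp C f i1) (cmp C p1 g)) (cmp C (cmp C f i2) (cmp C p2 g)) = idm C S'" .
  have q: "cmp C (cmp C p1 g) (cmp C f i1) = idm C X" "cmp C (cmp C p2 g) (cmp C f i2) = idm C Y"
    "cmp C (cmp C p1 g) (cmp C f i2) = zm C Y X" "cmp C (cmp C p2 g) (cmp C f i1) = zm C X Y"
    using m[of X X p1 i1] m[of Y Y p2 i2] m[of X Y p1 i2] m[of Y X p2 i1] s e by simp_all
  have h: "cmp C p1 g \<in> Hom C S' X" "cmp C p2 g \<in> Hom C S' Y" "cmp C f i1 \<in> Hom C X S'" "cmp C f i2 \<in> Hom C Y S'"
    using cmpH s f by meson+
  have "dsd X Y S' (cmp C p1 g) (cmp C p2 g) (cmp C f i1) (cmp C f i2)"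
    unfolding dsd_def using s f q h sum by simp
  thus ?thesis using dsum_iff by blast
qed

lemma dsum_isoX: assumes D: "is_dsum C X Y S" and I: "isomorphic C X X'" shows "is_dsum C X' Y S"
proof -
  obtain p1 p2 i1 i2 where d: "dsd X Y S p1 p2 i1 i2" using D dsum_iff by blast
  hence s: "X \<in> Ob C" "Y \<in> Ob C" "S \<in> Ob C" "p1 \<in> Hom C S X" "p2 \<in> Hom C S Y"
    "i1 \<in> Hom C X S" "i2 \<in> Hom C Y S" and e: "cmp C p1 i1 = idm C X" "cmp C p2 i2 = idm C Y"
    "cmp C p1 i2 = zm C Y X" "cmp C p2 i1 = zm C X Y" "madd C (cmp C i1 p1) (cmp C i2 p2) = idm C S"
    unfolding dsd_def by auto
  obtain f g where f: "X' \<in> Ob C" "f \<in> Hom C X X'" "g \<in> Hom C X' X" "cmp C g f = idm C X" "cmp C f g = idm C X'"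
    using I unfolding isomorphic_def is_iso_def by blast
  have 1: "cmp C (cmp C f p1) (cmp C i1 g) = idm C X'"
    using sw[of X' X S X X' g i1 p1 f] f s e idl by simp
  have 2: "cmp C p2 (cmp C i1 g) = zm C X' Y"
    using assoc[of X' X S Y g i1 p2] f s e cmp_zl by simp
  have 3: "cmp C (cmp C f p1) i2 = zm C Y X'"
    using assoc[of Y S X X' i2 p1 f] f s e cmp_zr by simp
  have 4: "cmp C (cmp C i1 g) (cmp C f p1) = cmp C i1 p1"
    using sw[of S X X' X S p1 f g i1] f s e idl by simp
  have 5: "madd C (cmp C (cmp C i1 g) (cmp C f p1)) (cmp C i2 p2) = idm C S" using 4 e(5) by simp
  have h: "cmp C f p1 \<in> Hom C S X'" "cmp C i1 g \<in> Hom C X' S" using cmpH s f by meson+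
  have "dsd X' Y S (cmp C f p1) p2 (cmp C i1 g) i2"
    unfolding dsd_def using s f e 1 2 3 5 h by simp
  thus ?thesis using dsum_iff by blast
qed

lemma dsum_isoY: "is_dsum C X Y S \<Longrightarrow> isomorphic C Y Y' \<Longrightarrow> is_dsum C X Y' S"
  using dsum_comm dsum_isoX by blast

lemma dsum_assoc: assumes d1: "is_dsum C A B P" and d2: "is_dsum C P C' Q" and d3: "is_dsum C B C' R"
  shows "is_dsum C A R Q"
proof -
  obtain pA pB jA jB where a: "dsd A B P pA pB jA jB" using d1 dsum_iff by blast
  obtain qP qC kP kC where b: "dsd P C' Q qP qC kP kC" using d2 dsum_iff by blast
  have s: "A \<in> Ob C" "B \<in> Ob C" "P \<in> Ob C" "C' \<in> Ob C" "Q \<in> Ob C" "jA \<in> Hom C A P" "kP \<in> Hom C P Q"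
    "pB \<in> Hom C P B" "pA \<in> Hom C P A" "cmp C pA jA = idm C A" using a b unfolding dsd_def by auto
  have T1: "(A, P, B, jA, pB, zm C B (sh C A)) \<in> Tri C" using split_tri_d[OF a] .
  have T2: "(P, Q, C', kP, qC, zm C C' (sh C P)) \<in> Tri C" using split_tri_d[OF b] .
  obtain Y' l l' where T3: "(A, Q, Y', cmp C kP jA, l, l') \<in> Tri C" using cone_ex s cmpH by meson
  have s3: "Y' \<in> Ob C" "l' \<in> Hom C Y' (sh C A)" using tri_shape[OF T3] by auto
  obtain u v where o: "(B, Y', C', u, v, cmp C (shm C pB) (zm C C' (sh C P))) \<in> Tri C"
    "cmp C (zm C C' (sh C P)) v = cmp C (shm C jA) l'" using TR4[OF T1 T2 T3] by blast
  have sv: "v \<in> Hom C Y' C'" using tri_shape[OF o(1)] by auto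
  have "cmp C (shm C pB) (zm C C' (sh C P)) = zm C C' (sh C B)" using cmp_zr shmH s by simp
  hence "(B, Y', C', u, v, zm C C' (sh C B)) \<in> Tri C" using o by simp
  hence dBC: "is_dsum C B C' Y'" using tri_split by blast
  have z: "cmp C (shm C jA) l' = zm C Y' (sh C P)" using o(2) cmp_zl[of Y' C' "sh C P" v] sv s s3 by simp
  have "cmp C (shm C pA) (shm C jA) = idm C (sh C A)" using shm_cmp[of A P A jA pA, symmetric] s shm_id by simp
  hence "l' = cmp C (cmp C (shm C pA) (shm C jA)) l'" using idl s3 s by simp
  also have "\<dots> = cmp C (shm C pA) (cmp C (shm C jA) l')"
    using assoc[of Y' "sh C A" "sh C P" "sh C A" l' "shm C jA" "shm C pA"] s s3 shmH by simp
  also have "\<dots> = zm C Y' (sh C A)" using z cmp_zr shmH s s3 by simp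
  finally have "(A, Q, Y', cmp C kP jA, l, zm C Y' (sh C A)) \<in> Tri C" using T3 by simp
  hence "is_dsum C A Y' Q" using tri_split by blast
  moreover have "isomorphic C Y' R" using dsum_uniq dBC d3 by blast
  ultimately show ?thesis using dsum_isoY by blast
qed


lemma zero_iso: assumes Z: "is_zero_obj C Z" and I: "isomorphic C Z Z'" shows "is_zero_obj C Z'"
proof -
  obtain a b where ab: "Z \<in> Ob C" "Z' \<in> Ob C" "a \<in> Hom C Z Z'" "b \<in> Hom C Z' Z" "cmp C a b = idm C Z'"
    using I unfolding isomorphic_def is_iso_def by blast
  { fix X assume X: "X \<in> Ob C"
    have "Hom C Z' X = {zm C Z' X}"
    proof
      show "Hom C Z' X \<subseteq> {zm C Z' X}"
      proof
        fix f assume f: "f \<in> Hom C Z' X"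
        have "f = cmp C f (cmp C a b)" using ab idr f X by simp
        also have "\<dots> = cmp C (cmp C f a) b" using assoc[of Z' Z Z' X b a f] ab f X by simp
        also have "cmp C f a = zm C Z X" using zero_out[OF Z X] cmpH ab f X by meson
        finally show "f \<in> {zm C Z' X}" using cmp_zl ab X by simp
      qed
      show "{zm C Z' X} \<subseteq> Hom C Z' X" using ab X by simp
    qed
    moreover have "Hom C X Z' = {zm C X Z'}"
    proof
      show "Hom C X Z' \<subseteq> {zm C X Z'}"
      proof
        fix f assume f: "f \<in> Hom C X Z'"
        have "f = cmp C (cmp C a b) f" using ab idl f X by simp
        also have "\<dots> = cmp C a (cmp C b f)" using assoc[of X Z' Z Z' f b a] ab f X by simp
        also have "cmp C b f = zm C X Z" using zero_in[OF Z X] cmpH ab f X by meson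
        finally show "f \<in> {zm C X Z'}" using cmp_zr ab X by simp
      qed
      show "{zm C X Z'} \<subseteq> Hom C X Z'" using ab X by simp
    qed
    ultimately have "Hom C Z' X = {zm C Z' X} \<and> Hom C X Z' = {zm C X Z'}" by blast }
  thus ?thesis unfolding is_zero_obj_def using ab by blast
qed

lemma zeros_iso: assumes "is_zero_obj C Z" "is_zero_obj C Z'" shows "isomorphic C Z Z'"
proof -
  have o: "Z \<in> Ob C" "Z' \<in> Ob C" using assms zeroOb by auto
  have "cmp C (zm C Z' Z) (zm C Z Z') = idm C Z" "cmp C (zm C Z Z') (zm C Z' Z) = idm C Z'"
    using cmp_zl o zero_id assms by simp_all
  thus ?thesis unfolding isomorphic_def is_iso_def using o zmH[of Z Z'] zmH[of Z' Z] by blast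
qed

lemma dsd_swap: "dsd A B S pA pB jA jB \<Longrightarrow> dsd B A S pB pA jB jA"
  unfolding dsd_def using add_comm cmpH by (elim conjE) (intro conjI; (assumption | metis))

inductive msum :: "'o multiset \<Rightarrow> 'o \<Rightarrow> bool" where
  ms_empty: "is_zero_obj C Z \<Longrightarrow> msum {#} Z"
| ms_add: "msum M S \<Longrightarrow> X \<in> Ob C \<Longrightarrow> is_dsum C S X S' \<Longrightarrow> msum (add_mset X M) S'"

lemma ms_Ob: "msum M S \<Longrightarrow> S \<in> Ob C \<and> set_mset M \<subseteq> Ob C"
  by (induction rule: msum.induct) (auto simp: zeroOb dsumOb)

lemma ms_ex: "set_mset M \<subseteq> Ob C \<Longrightarrow> \<exists>S. msum M S"
proof (induction M)
  case empty thus ?case using zero_ex ms_empty by blast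
next
  case (add X M)
  then obtain S where "msum M S" by auto
  moreover have "X \<in> Ob C" using add by simp
  moreover obtain S' where "is_dsum C S X S'" using dsum_ex ms_Ob calculation by blast
  ultimately show ?case using ms_add by blast
qed

lemma ms_iso: "msum M S \<Longrightarrow> isomorphic C S S' \<Longrightarrow> msum M S'"
proof (induction rule: msum.induct)
  case (ms_empty Z) thus ?case using zero_iso msum.ms_empty by blast
next
  case (ms_add M S X S'') thus ?case using dsum_isoS msum.ms_add by blast
qed

lemma dsum_swap: assumes "is_dsum C S2 X S1" "is_dsum C S1 Y S'" "is_dsum C S2 Y S3" shows "is_dsum C S3 X S'"
proof -
  have o: "X \<in> Ob C" "Y \<in> Ob C" "S3 \<in> Ob C" using assms dsumOb by auto
  obtain R where R: "is_dsum C X Y R" using dsum_ex o by blast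
  have 1: "is_dsum C S2 R S'" using dsum_assoc assms R by blast
  obtain S4 where S4: "is_dsum C S3 X S4" using dsum_ex o by blast
  have "is_dsum C S2 R S4" using dsum_assoc[OF assms(3) S4 dsum_comm[OF R]] .
  hence "isomorphic C S4 S'" using dsum_uniq 1 by blast
  thus ?thesis using dsum_isoS S4 by blast
qed

lemma ms_remove: "msum N S' \<Longrightarrow> X \<in># N \<Longrightarrow> \<exists>S0. msum (N - {#X#}) S0 \<and> is_dsum C S0 X S'"
proof (induction arbitrary: X rule: msum.induct)
  case (ms_empty Z) thus ?case by simp
next
  case (ms_add M S Y S')
  show ?case
  proof (cases "X = Y")
    case True thus ?thesis using ms_add by auto
  next
    case False
    hence "X \<in># M" using ms_add by simp
    then obtain S2 where S2: "msum (M - {#X#}) S2" "is_dsum C S2 X S" using ms_add by blast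
    obtain S3 where S3: "is_dsum C S2 Y S3" using dsum_ex ms_add dsumOb S2 by blast
    have "msum (add_mset Y (M - {#X#})) S3" using msum.ms_add S2 S3 ms_add by blast
    moreover have "add_mset Y (M - {#X#}) = add_mset Y M - {#X#}" using False by simp
    moreover have "is_dsum C S3 X S'" using dsum_swap S2 ms_add S3 by blast
    ultimately show ?thesis by auto
  qed
qed

lemma ms_uniq: "msum M S \<Longrightarrow> msum M S' \<Longrightarrow> isomorphic C S S'"
proof (induction arbitrary: S' rule: msum.induct)
  case (ms_empty Z)
  from ms_empty(2) have "is_zero_obj C S'" by (cases rule: msum.cases) auto
  thus ?case using zeros_iso ms_empty(1) by blast
next
  case (ms_add M S X S1)
  have "\<exists>S0. msum (add_mset X M - {#X#}) S0 \<and> is_dsum C S0 X S'" using ms_remove[OF ms_add.prems, of X] by simp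
  then obtain S0 where "msum M S0" "is_dsum C S0 X S'" by auto
  moreover have "isomorphic C S S0" using ms_add calculation by blast
  ultimately show ?case using dsum_isoX dsum_uniq ms_add by blast
qed

lemma ms_union: "msum N B \<Longrightarrow> msum M A \<Longrightarrow> is_dsum C A B S \<Longrightarrow> msum (M + N) S"
proof (induction arbitrary: S rule: msum.induct)
  case (ms_empty Z)
  have "is_dsum C A Z A" using dsum_comm dsum_zero ms_empty ms_Ob by blast
  hence "isomorphic C A S" using dsum_uniq ms_empty by blast
  thus ?case using ms_iso ms_empty by simp
next
  case (ms_add N' B0 X B)
  obtain S0 where S0: "is_dsum C A B0 S0" using dsum_ex ms_add ms_Ob by blast
  have m: "msum (M + N') S0" using ms_add S0 by blast
  obtain S1 where S1: "is_dsum C S0 X S1" using dsum_ex ms_add ms_Ob m by blast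
  have "msum (add_mset X (M + N')) S1" using msum.ms_add m S1 ms_add by blast
  moreover have "is_dsum C A B S1" using dsum_assoc[OF S0 S1 ms_add(3)] .
  hence "isomorphic C S1 S" using dsum_uniq ms_add by blast
  ultimately show ?case using ms_iso by simp
qed

lemma ms_sh: "msum M S \<Longrightarrow> msum (image_mset (sh C) M) (sh C S)"
  by (induction rule: msum.induct) (auto intro: msum.intros zero_sh dsum_sh)

lemma ms_single: assumes "X \<in> Ob C" shows "msum {#X#} X"
proof -
  obtain Z where Z: "is_zero_obj C Z" using zero_ex by blast
  show ?thesis using ms_add[OF ms_empty[OF Z] assms dsum_zero[OF Z assms]] by simp
qed

lemma ms_power: assumes "X \<in> Ob C" shows "n \<ge> 1 \<Longrightarrow> \<exists>S. is_power C X n S \<and> msum (repeat_mset n {#X#}) S"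
proof (induction n rule: nat_induct_at_least)
  case base thus ?case using ms_single assms pw_one by fastforce
next
  case (Suc n)
  then obtain S where S: "is_power C X n S" "msum (repeat_mset n {#X#}) S" by blast
  obtain S' where S': "is_dsum C S X S'" using dsum_ex ms_Ob S assms by blast
  have "is_power C X (Suc n) S'" using pw_suc[OF S(1) S'] .
  moreover have "msum (add_mset X (repeat_mset n {#X#})) S'" using ms_add S S' assms by blast
  ultimately show ?case by auto
qed


lemma sub_Ob: "tri_subcat C D \<Longrightarrow> X \<in> D \<Longrightarrow> X \<in> Ob C" unfolding tri_subcat_def by blast
lemma sub_sh: "tri_subcat C D \<Longrightarrow> X \<in> D \<Longrightarrow> sh C X \<in> D" unfolding tri_subcat_def by blast
lemma sub_shinv: "tri_subcat C D \<Longrightarrow> X \<in> Ob C \<Longrightarrow> sh C X \<in> D \<Longrightarrow> X \<in> D" unfolding tri_subcat_def by blast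
lemma sub_iso: "tri_subcat C D \<Longrightarrow> X \<in> D \<Longrightarrow> isomorphic C X Y \<Longrightarrow> Y \<in> D" unfolding tri_subcat_def by blast
lemma sub_cone: "tri_subcat C D \<Longrightarrow> (X,Y,Z,f,g,h) \<in> Tri C \<Longrightarrow> X \<in> D \<Longrightarrow> Y \<in> D \<Longrightarrow> Z \<in> D"
  unfolding tri_subcat_def by blast
lemma sub_23a: assumes "tri_subcat C D" "(X,Y,Z,f,g,h) \<in> Tri C" "Y \<in> D" "Z \<in> D" shows "X \<in> D"
  using sub_cone[OF assms(1) rot[OF assms(2)]] assms sub_shinv tri_shape by blast
lemma sub_23b: assumes "tri_subcat C D" "(X,Y,Z,f,g,h) \<in> Tri C" "X \<in> D" "Z \<in> D" shows "Y \<in> D"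
  using sub_cone[OF assms(1) rot[OF rot[OF assms(2)]]] assms sub_shinv sub_sh tri_shape by blast
lemma sub_dsum: assumes "tri_subcat C D" "is_dsum C X Y S" "X \<in> D" "Y \<in> D" shows "S \<in> D"
  using split_tri[OF assms(2)] sub_23b assms by blast
lemma sub_dsum_cancel: assumes "tri_subcat C D" "is_dsum C X Y S" "X \<in> D" "S \<in> D" shows "Y \<in> D"
  using split_tri[OF assms(2)] sub_cone assms by blast

lemma dense_sub: "dense_subcat C D \<Longrightarrow> tri_subcat C D" unfolding dense_subcat_def by blast

lemma dense_zero: assumes "dense_subcat C D" "is_zero_obj C Z" shows "Z \<in> D"
proof -
  have Zo: "Z \<in> Ob C" using zeroOb assms by blast
  obtain V S where "is_dsum C Z V S" "S \<in> D" using assms Zo unfolding dense_subcat_def by blast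
  hence So: "S \<in> Ob C" "S \<in> D" using dsumOb by auto
  show ?thesis using sub_cone[OF dense_sub[OF assms(1)] tri_id[OF So(1) assms(2)]] So by blast
qed

definition good :: "'o set \<Rightarrow> 'o multiset \<Rightarrow> bool" where
  "good D M \<longleftrightarrow> (\<exists>S. msum M S \<and> S \<in> D)"

lemma good_all: "tri_subcat C D \<Longrightarrow> good D M \<Longrightarrow> msum M S \<Longrightarrow> S \<in> D"
  unfolding good_def using ms_uniq sub_iso by blast

lemma good_add: assumes D: "tri_subcat C D" and "good D M" "good D N" shows "good D (M + N)"
proof -
  obtain A B where AB: "msum M A" "A \<in> D" "msum N B" "B \<in> D" using assms unfolding good_def by blast
  obtain S where S: "is_dsum C A B S" using dsum_ex AB ms_Ob by blast
  show ?thesis unfolding good_def using ms_union[OF AB(3) AB(1) S] sub_dsum[OF D S] AB by blast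
qed

lemma good_cancel: assumes D: "tri_subcat C D" and "good D (M + N)" "good D M" "set_mset N \<subseteq> Ob C"
  shows "good D N"
proof -
  obtain A where A: "msum M A" "A \<in> D" using assms unfolding good_def by blast
  obtain B where B: "msum N B" using ms_ex assms by blast
  obtain S where S: "is_dsum C A B S" using dsum_ex A B ms_Ob by blast
  have "S \<in> D" using good_all[OF D assms(2) ms_union[OF B A(1) S]] .
  thus ?thesis unfolding good_def using sub_dsum_cancel[OF D S A(2)] B by blast
qed

lemma good_empty: "dense_subcat C D \<Longrightarrow> good D {#}"
  unfolding good_def using zero_ex ms_empty dense_zero by blast

lemma good_sh: "tri_subcat C D \<Longrightarrow> good D M \<Longrightarrow> good D (image_mset (sh C) M)"
  unfolding good_def using ms_sh sub_sh by blast

lemma good_single: "tri_subcat C D \<Longrightarrow> E \<in> D \<Longrightarrow> good D {#E#}"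
  unfolding good_def using ms_single sub_Ob by blast

lemma good_repeat: assumes "dense_subcat C D" "good D M" shows "good D (repeat_mset n M)"
proof (induction n)
  case 0 thus ?case using good_empty assms by simp
next
  case (Suc n) thus ?case using good_add[OF dense_sub[OF assms(1)] assms(2)] by simp
qed

lemma core_O5: assumes D: "tri_subcat C D" and d: "dsd A B S pA pB jA jB" and SD: "S \<in> D"
  shows "\<exists>W\<in>D. is_dsum C (sh C B) B W"
proof -
  have s: "A \<in> Ob C" "B \<in> Ob C" "S \<in> Ob C" "pA \<in> Hom C S A" "jA \<in> Hom C A S"
    using d unfolding dsd_def by auto
  have T1: "(S, A, sh C B, pA, zm C A (sh C B), mneg C (shm C jB)) \<in> Tri C"
    using rot[OF split_tri_d[OF dsd_swap[OF d]]] .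
  have T2: "(A, S, B, jA, pB, zm C B (sh C A)) \<in> Tri C" using split_tri_d[OF d] .
  obtain W l l' where T3: "(S, S, W, cmp C jA pA, l, l') \<in> Tri C" using cone_ex s cmpH by meson
  have WD: "W \<in> D" using sub_cone[OF D T3 SD SD] .
  obtain u v where o: "(sh C B, W, B, u, v, cmp C (shm C (zm C A (sh C B))) (zm C B (sh C A))) \<in> Tri C"
    using TR4[OF T1 T2 T3] by blast
  have "cmp C (shm C (zm C A (sh C B))) (zm C B (sh C A)) = zm C B (sh C (sh C B))"
    using shm_zero cmp_zl s by simp
  hence "is_dsum C (sh C B) B W" using tri_split o by simp
  thus ?thesis using WD by blast
qed

lemma XTX: assumes D: "dense_subcat C D" and X: "X \<in> Ob C" shows "\<exists>W\<in>D. is_dsum C X (sh C X) W"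
proof -
  obtain V S where "is_dsum C X V S" "S \<in> D" using D X unfolding dense_subcat_def by blast
  then obtain p1 p2 i1 i2 where "dsd V X S p1 p2 i1 i2" "S \<in> D" using dsum_comm dsum_iff by blast
  thus ?thesis using core_O5 dense_sub[OF D] dsum_comm by blast
qed

lemma good_XTX: assumes D: "dense_subcat C D" and X: "X \<in> Ob C" shows "good D {#X, sh C X#}"
proof -
  obtain W where W: "W \<in> D" "is_dsum C X (sh C X) W" using XTX assms by blast
  have "msum (add_mset (sh C X) {#X#}) W" using ms_add[OF ms_single[OF X] _ W(2)] X by simp
  thus ?thesis unfolding good_def using W by (auto simp: add_mset_commute)
qed

lemma good_MTM: assumes D: "dense_subcat C D" shows "set_mset M \<subseteq> Ob C \<Longrightarrow> good D (M + image_mset (sh C) M)"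
proof (induction M)
  case empty thus ?case using good_empty D by simp
next
  case (add X M)
  have "good D (M + image_mset (sh C) M)" using add by simp
  moreover have "good D {#X, sh C X#}" using good_XTX D add by simp
  ultimately have "good D (M + image_mset (sh C) M + {#X, sh C X#})" using good_add dense_sub D by blast
  thus ?case by (simp add: add_mset_commute)
qed

lemma good_sym: assumes D: "dense_subcat C D" and P: "set_mset P \<subseteq> Ob C" and Q: "set_mset Q \<subseteq> Ob C"
  and g: "good D (Q + image_mset (sh C) P)" shows "good D (P + image_mset (sh C) Q)"
proof -
  have "good D ((P + image_mset (sh C) P) + (Q + image_mset (sh C) Q))"
    using good_add dense_sub[OF D] good_MTM[OF D] P Q by blast
  hence "good D ((Q + image_mset (sh C) P) + (P + image_mset (sh C) Q))" by (simp add: ac_simps)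
  moreover have "set_mset (P + image_mset (sh C) Q) \<subseteq> Ob C" using P Q shOb by auto
  ultimately show ?thesis using good_cancel[OF dense_sub[OF D] _ g] by blast
qed


lemma good_tri: assumes D: "dense_subcat C D" and Ta: "(U,V,W,f,g,h) \<in> Tri C"
  shows "good D ({#V#} + image_mset (sh C) {#U, W#})"
proof -
  have DD: "tri_subcat C D" using dense_sub D by blast
  have s: "U \<in> Ob C" "V \<in> Ob C" "W \<in> Ob C" "f \<in> Hom C U V" "g \<in> Hom C V W"
    using tri_shape[OF Ta] by auto
  obtain P where P: "P \<in> D" "is_dsum C V (sh C V) P" using XTX D s by blast
  then obtain p1 p2 i1 i2 where dP: "dsd V (sh C V) P p1 p2 i1 i2" using dsum_iff by blast
  have sP: "P \<in> Ob C" "i1 \<in> Hom C V P" using dP unfolding dsd_def by auto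
  have Tb: "(V, P, sh C V, i1, p2, zm C (sh C V) (sh C V)) \<in> Tri C" using split_tri_d[OF dP] .
  obtain Y1 l l' where Tc: "(U, P, Y1, cmp C i1 f, l, l') \<in> Tri C" using cone_ex s sP cmpH by meson
  have sc: "Y1 \<in> Ob C" "l' \<in> Hom C Y1 (sh C U)" using tri_shape[OF Tc] by auto
  obtain u v where o1: "(W, Y1, sh C V, u, v, cmp C (shm C g) (zm C (sh C V) (sh C V))) \<in> Tri C"
    using TR4[OF Ta Tb Tc] by blast
  have "cmp C (shm C g) (zm C (sh C V) (sh C V)) = zm C (sh C V) (sh C W)" using cmp_zr shmH s by simp
  hence d1: "is_dsum C W (sh C V) Y1" using tri_split o1 by simp
  obtain Q where Q: "Q \<in> D" "is_dsum C U (sh C U) Q" using XTX D s by blast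
  then obtain q1 q2 j1 j2 where dQ: "dsd U (sh C U) Q q1 q2 j1 j2" using dsum_iff by blast
  have sQ: "Q \<in> Ob C" "q1 \<in> Hom C Q U" using dQ unfolding dsd_def by auto
  have Td: "(Q, U, sh C (sh C U), q1, zm C U (sh C (sh C U)), mneg C (shm C j2)) \<in> Tri C"
    using rot[OF split_tri_d[OF dsd_swap[OF dQ]]] .
  obtain Y2 l2 l2' where Te: "(Q, P, Y2, cmp C (cmp C i1 f) q1, l2, l2') \<in> Tri C"
    using cone_ex s sP sQ cmpH by meson
  have Y2D: "Y2 \<in> D" using sub_cone[OF DD Te Q(1) P(1)] .
  obtain u' v' where o2: "(sh C (sh C U), Y2, Y1, u', v', cmp C (shm C (zm C U (sh C (sh C U)))) l') \<in> Tri C"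
    using TR4[OF Td Tc Te] by blast
  have "cmp C (shm C (zm C U (sh C (sh C U)))) l' = zm C Y1 (sh C (sh C (sh C U)))"
    using shm_zero cmp_zl sc s by simp
  hence d2: "is_dsum C (sh C (sh C U)) Y1 Y2" using tri_split o2 by simp
  have m1: "msum (add_mset (sh C V) {#W#}) Y1" using ms_add[OF ms_single[OF s(3)] _ d1] s by simp
  have m2: "msum (add_mset (sh C (sh C U)) (add_mset (sh C V) {#W#})) Y2"
    using ms_add[OF m1 _ dsum_comm[OF d2]] s by simp
  have g1: "good D ({#sh C U, sh C (sh C U)#} + ({#W, sh C V#} + {#U#}))"
  proof -
    have "good D (add_mset (sh C (sh C U)) (add_mset (sh C V) {#W#}) + {#U, sh C U#})"
      using good_add[OF DD] m2 Y2D good_XTX[OF D s(1)] unfolding good_def by blast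
    thus ?thesis by (simp add: add_mset_commute)
  qed
  have g2: "good D {#sh C U, sh C (sh C U)#}" using good_XTX D s by simp
  have "good D ({#W, sh C V#} + {#U#})" using good_cancel[OF DD g1 g2] s by simp
  hence "good D ({#U, W#} + image_mset (sh C) {#V#})" by (simp add: add_mset_commute)
  thus ?thesis using good_sym[OF D, of "{#V#}" "{#U, W#}"] s by simp
qed

end

definition vec :: "'o multiset \<Rightarrow> ('o \<Rightarrow> rat)" where "vec M = (\<lambda>x. of_nat (count M x))"
definition sm :: "rat \<Rightarrow> ('o \<Rightarrow> rat) \<Rightarrow> ('o \<Rightarrow> rat)" where "sm c v = (\<lambda>x. c * v x)"


lemma vec_empty[simp]: "vec {#} = 0" unfolding vec_def by (rule ext) simp
lemma vec_add[simp]: "vec (M + N) = vec M + vec N" unfolding vec_def by (rule ext) simp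
lemma vec_single: "vec {#X#} = gen X" unfolding vec_def gen_def by (rule ext) simp
lemma vec_addm: "vec (add_mset X M) = gen X + vec M" unfolding vec_def gen_def by (rule ext) simp
lemma vec_repeat: "vec (repeat_mset n M) = sm (of_nat n) (vec M)" unfolding vec_def sm_def by (rule ext) simp

lemma qspan_smI: "v \<in> qspan S \<Longrightarrow> sm c v \<in> qspan S" unfolding sm_def by (rule qs_smult)
lemma qspan_neg: "v \<in> qspan S \<Longrightarrow> - v \<in> qspan S"
proof -
  assume "v \<in> qspan S"
  hence "sm (-1) v \<in> qspan S" by (rule qspan_smI)
  moreover have "sm (-1) v = - v" unfolding sm_def by (rule ext) simp
  ultimately show ?thesis by simp
qed

lemma qspan_diff: "v \<in> qspan S \<Longrightarrow> w \<in> qspan S \<Longrightarrow> v - w \<in> qspan S"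
proof -
  assume "v \<in> qspan S" "w \<in> qspan S"
  hence "v + - w \<in> qspan S" using qs_add[of v S "- w"] qspan_neg[of w S] by simp
  thus ?thesis by (simp only: diff_conv_add_uminus)
qed
lemma qspan_mono: assumes "S \<subseteq> T" "v \<in> qspan S" shows "v \<in> qspan T"
  using assms(2)
proof (induction rule: qspan.induct)
  case qs_zero show ?case by (rule qspan.qs_zero)
next
  case (qs_gen v) thus ?case using assms(1) qspan.qs_gen by blast
next
  case (qs_add v w) thus ?case using qspan.qs_add by blast
next
  case (qs_smult v c) thus ?case using qspan.qs_smult by blast
qed
lemma repeat_image: "image_mset f (repeat_mset n M) = repeat_mset n (image_mset f M)"
  by (induction n) simp_all
lemma rep:
  assumes v: "v \<in> qspan G"
  and G: "\<And>g. g \<in> G \<Longrightarrow> \<exists>P Q. R P Q \<and> g = vec P - vec Q"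
  and R0: "R {#} {#}"
  and Radd: "\<And>P Q P' Q'. R P Q \<Longrightarrow> R P' Q' \<Longrightarrow> R (P + P') (Q + Q')"
  and Rsym: "\<And>P Q. R P Q \<Longrightarrow> R Q P"
  and Rrep: "\<And>n P Q. R P Q \<Longrightarrow> R (repeat_mset n P) (repeat_mset n Q)"
  shows "\<exists>N::nat. N > 0 \<and> (\<exists>P Q. R P Q \<and> sm (of_nat N) v = vec P - vec Q)"
  using v
proof (induction rule: qspan.induct)
  case qs_zero
  have "sm (of_nat 1) 0 = vec {#} - vec {#}" unfolding sm_def by (rule ext) simp
  moreover have "(1::nat) > 0" by simp
  ultimately show ?case using R0 by blast
next
  case (qs_gen v)
  then obtain P Q where "R P Q" "v = vec P - vec Q" using G by blast
  moreover have "sm (of_nat 1) v = v" unfolding sm_def by (rule ext) simp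
  moreover have "(1::nat) > 0" by simp
  ultimately show ?case by metis
next
  case (qs_add v w)
  then obtain N1 P1 Q1 N2 P2 Q2 where a: "N1 > 0" "R P1 Q1" "sm (of_nat N1) v = vec P1 - vec Q1"
    and b: "N2 > 0" "R P2 Q2" "sm (of_nat N2) w = vec P2 - vec Q2" by blast
  let ?P = "repeat_mset N2 P1 + repeat_mset N1 P2" and ?Q = "repeat_mset N2 Q1 + repeat_mset N1 Q2"
  have "R ?P ?Q" using Radd Rrep a b by blast
  moreover have "sm (of_nat (N1 * N2)) (v + w) = vec ?P - vec ?Q"
  proof
    fix x
    have 1: "of_nat N1 * v x = of_nat (count P1 x) - of_nat (count Q1 x)"
      using fun_cong[OF a(3), of x] unfolding sm_def vec_def by simp
    have 2: "of_nat N2 * w x = of_nat (count P2 x) - of_nat (count Q2 x)"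
      using fun_cong[OF b(3), of x] unfolding sm_def vec_def by simp
    have "sm (of_nat (N1 * N2)) (v + w) x = of_nat N2 * (of_nat N1 * v x) + of_nat N1 * (of_nat N2 * w x)"
      unfolding sm_def by (simp add: algebra_simps)
    also have "\<dots> = (vec ?P - vec ?Q) x" unfolding 1 2 vec_def by (simp add: algebra_simps)
    finally show "sm (of_nat (N1 * N2)) (v + w) x = (vec ?P - vec ?Q) x" .
  qed
  moreover have "N1 * N2 > 0" using a b by simp
  ultimately show ?case by blast
next
  case (qs_smult v c)
  then obtain N P Q where a: "N > 0" "R P Q" "sm (of_nat N) v = vec P - vec Q" by blast
  obtain p q where pq: "quotient_of c = (p, q)" by (cases "quotient_of c") auto
  have q: "q > 0" using quotient_of_denom_pos[OF pq] .
  have c: "c = of_int p / of_int q" using quotient_of_div[OF pq] .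
  have pt: "\<And>x. of_nat N * v x = of_nat (count P x) - of_nat (count Q x)"
    using fun_cong[OF a(3)] unfolding sm_def vec_def by simp
  have key: "\<And>x. sm (of_nat (nat q * N)) (\<lambda>x. c * v x) x = of_int p * (of_nat (count P x) - of_nat (count Q x))"
  proof -
    fix x
    have "sm (of_nat (nat q * N)) (\<lambda>x. c * v x) x = of_int q * c * (of_nat N * v x)"
      unfolding sm_def using q by (simp add: algebra_simps)
    also have "of_int q * c = (of_int p :: rat)" using q c by simp
    finally show "sm (of_nat (nat q * N)) (\<lambda>x. c * v x) x = of_int p * (of_nat (count P x) - of_nat (count Q x))"
      using pt by simp
  qed
  have N': "nat q * N > 0" using q a by simp
  show ?case
  proof (cases "p \<ge> 0")
    case True
    let ?P = "repeat_mset (nat p) P" and ?Q = "repeat_mset (nat p) Q"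
    have "sm (of_nat (nat q * N)) (\<lambda>x. c * v x) = vec ?P - vec ?Q"
    proof
      fix x show "sm (of_nat (nat q * N)) (\<lambda>x. c * v x) x = (vec ?P - vec ?Q) x"
        using key[of x] True unfolding vec_def by (simp add: algebra_simps)
    qed
    thus ?thesis using N' Rrep a by blast
  next
    case False
    let ?P = "repeat_mset (nat (- p)) Q" and ?Q = "repeat_mset (nat (- p)) P"
    have "sm (of_nat (nat q * N)) (\<lambda>x. c * v x) = vec ?P - vec ?Q"
    proof
      fix x show "sm (of_nat (nat q * N)) (\<lambda>x. c * v x) x = (vec ?P - vec ?Q) x"
        using key[of x] False unfolding vec_def by (simp add: algebra_simps)
    qed
    thus ?thesis using N' Rrep Rsym a by blast
  qed
qed


context TC begin

definition R0 where "R0 = {gen Y - gen X | X Y. isomorphic C X Y} \<union>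
                    {gen V - gen U - gen W | U V W f g h. (U, V, W, f, g, h) \<in> Tri C}"
lemma rels_R0: "relsQ C = qspan R0" unfolding relsQ_def R0_def by simp

lemma gcls_eq: "gcls C a = gcls C b \<longleftrightarrow> a - b \<in> relsQ C"
proof
  assume e: "gcls C a = gcls C b"
  have "a \<in> gcls C a" unfolding gcls_def using qs_zero relsQ_def by force
  hence "a \<in> gcls C b" using e by simp
  then obtain r where "r \<in> relsQ C" "a = b + r" unfolding gcls_def by blast
  thus "a - b \<in> relsQ C" by simp
next
  assume d: "a - b \<in> relsQ C"
  show "gcls C a = gcls C b"
  proof
    show "gcls C a \<subseteq> gcls C b"
    proof
      fix x assume "x \<in> gcls C a"
      then obtain r where r: "r \<in> relsQ C" "x = a + r" unfolding gcls_def by blast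
      have "(a - b) + r \<in> relsQ C" using d r qs_add unfolding relsQ_def by blast
      moreover have "x = b + ((a - b) + r)" using r by (simp add: algebra_simps)
      ultimately show "x \<in> gcls C b" unfolding gcls_def by blast
    qed
    show "gcls C b \<subseteq> gcls C a"
    proof
      fix x assume "x \<in> gcls C b"
      then obtain r where r: "r \<in> relsQ C" "x = b + r" unfolding gcls_def by blast
      have "r - (a - b) \<in> relsQ C" using d r qspan_diff unfolding relsQ_def by blast
      moreover have "x = a + (r - (a - b))" using r by (simp add: algebra_simps)
      ultimately show "x \<in> gcls C a" unfolding gcls_def by blast
    qed
  qed
qed

lemma rels_add: "a \<in> relsQ C \<Longrightarrow> b \<in> relsQ C \<Longrightarrow> a + b \<in> relsQ C" unfolding relsQ_def by (rule qs_add)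
lemma rels_diff: "a \<in> relsQ C \<Longrightarrow> b \<in> relsQ C \<Longrightarrow> a - b \<in> relsQ C" unfolding relsQ_def by (rule qspan_diff)
lemma rels_neg: "a \<in> relsQ C \<Longrightarrow> - a \<in> relsQ C" unfolding relsQ_def by (rule qspan_neg)
lemma rels_sm: "a \<in> relsQ C \<Longrightarrow> sm c a \<in> relsQ C" unfolding relsQ_def by (rule qspan_smI)
lemma rels_0: "0 \<in> relsQ C" unfolding relsQ_def by (rule qs_zero)

lemma rel_iso: "isomorphic C X Y \<Longrightarrow> gen Y - gen X \<in> relsQ C"
  unfolding rels_R0 R0_def by (rule qs_gen) blast
lemma rel_tri: "(U, V, W, f, g, h) \<in> Tri C \<Longrightarrow> gen V - gen U - gen W \<in> relsQ C"
  unfolding rels_R0 R0_def by (rule qs_gen) blast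

lemma rel_zero_obj: assumes "is_zero_obj C Z" shows "gen Z \<in> relsQ C"
proof -
  have "Z \<in> Ob C" using zeroOb assms by blast
  hence "gen Z - gen Z - gen Z \<in> relsQ C" using rel_tri tri_id assms by blast
  hence "- (gen Z - gen Z - gen Z) \<in> relsQ C" by (rule rels_neg)
  thus ?thesis by simp
qed

lemma rel_sh: assumes X: "X \<in> Ob C" shows "gen X + gen (sh C X) \<in> relsQ C"
proof -
  obtain Z where Z: "is_zero_obj C Z" using zero_ex by blast
  have "gen Z - gen X - gen (sh C X) \<in> relsQ C" using rel_tri rot[OF tri_id[OF X Z]] by blast
  hence "gen Z - (gen Z - gen X - gen (sh C X)) \<in> relsQ C" using rels_diff rel_zero_obj Z by blast
  thus ?thesis by (simp add: algebra_simps)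
qed

lemma rel_dsum: assumes "is_dsum C X Y S" shows "gen S - gen X - gen Y \<in> relsQ C"
  using split_tri[OF assms] rel_tri by blast

lemma rel_msum: "msum M S \<Longrightarrow> gen S - vec M \<in> relsQ C"
proof (induction rule: msum.induct)
  case (ms_empty Z) thus ?case using rel_zero_obj by simp
next
  case (ms_add M S X S')
  have "(gen S' - gen S - gen X) + (gen S - vec M) \<in> relsQ C" using rels_add rel_dsum ms_add by blast
  moreover have eq: "(gen S' - gen S - gen X) + (gen S - vec M) = gen S' - vec (add_mset X M)"
    by (rule ext) (simp add: vec_addm)
  ultimately show ?case by metis
qed

lemma rel_MTM: "set_mset M \<subseteq> Ob C \<Longrightarrow> vec M + vec (image_mset (sh C) M) \<in> relsQ C"
proof (induction M)
  case empty
  have "vec {#} + vec (image_mset (sh C) {#}) = 0" by simp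
  thus ?case using rels_0 by metis
next
  case (add X M)
  have 1: "gen X + gen (sh C X) \<in> relsQ C" using rel_sh add.prems by simp
  have "set_mset M \<subseteq> Ob C" using add.prems by simp
  note 2 = add.IH[OF this]
  have "(gen X + gen (sh C X)) + (vec M + vec (image_mset (sh C) M)) \<in> relsQ C" using rels_add[OF 1 2] .
  moreover have "(gen X + gen (sh C X)) + (vec M + vec (image_mset (sh C) M)) = vec (add_mset X M) + vec (image_mset (sh C) (add_mset X M))"
    by (rule ext) (simp add: vec_addm)
  ultimately show ?case by metis
qed

lemma rel_power: "is_power C U n S \<Longrightarrow> gen S - sm (of_nat n) (gen U) \<in> relsQ C"
proof (induction rule: is_power.induct)
  case (pw_one U)
  have "gen U - sm (of_nat (Suc 0)) (gen U) = 0" unfolding sm_def by (rule ext) simp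
  thus ?case using rels_0 by metis
next
  case (pw_suc U n T S)
  have "(gen S - gen T - gen U) + (gen T - sm (of_nat n) (gen U)) \<in> relsQ C" using rels_add rel_dsum pw_suc by blast
  moreover have "(gen S - gen T - gen U) + (gen T - sm (of_nat n) (gen U)) = gen S - sm (of_nat (Suc n)) (gen U)"
    unfolding sm_def by (rule ext) (simp add: algebra_simps)
  ultimately show ?case by metis
qed

lemma free_gen: "X \<in> Ob C \<Longrightarrow> gen X \<in> freeQ C" unfolding freeQ_def by (rule qs_gen) blast
lemma free_add: "a \<in> freeQ C \<Longrightarrow> b \<in> freeQ C \<Longrightarrow> a + b \<in> freeQ C" unfolding freeQ_def by (rule qs_add)
lemma free_diff: "a \<in> freeQ C \<Longrightarrow> b \<in> freeQ C \<Longrightarrow> a - b \<in> freeQ C" unfolding freeQ_def by (rule qspan_diff)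
lemma free_sm: "a \<in> freeQ C \<Longrightarrow> sm c a \<in> freeQ C" unfolding freeQ_def by (rule qspan_smI)
lemma free_0: "0 \<in> freeQ C" unfolding freeQ_def by (rule qs_zero)
lemma rels_free: "a \<in> relsQ C \<Longrightarrow> a \<in> freeQ C"
proof -
  have "R0 \<subseteq> freeQ C"
  proof
    fix r assume "r \<in> R0"
    then consider (i) X Y where "r = gen Y - gen X" "isomorphic C X Y"
      | (t) U V W f g h where "r = gen V - gen U - gen W" "(U, V, W, f, g, h) \<in> Tri C" unfolding R0_def by blast
    thus "r \<in> freeQ C"
    proof cases
      case i thus ?thesis using free_diff free_gen unfolding isomorphic_def by auto
    next
      case t thus ?thesis using free_diff free_gen tri_shape by meson
    qed
  qed
  note R = this
  assume "a \<in> relsQ C"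
  hence "a \<in> qspan R0" unfolding rels_R0 .
  thus ?thesis using R
  proof (induction rule: qspan.induct)
    case qs_zero show ?case using free_0 .
  next
    case (qs_gen v) thus ?case by blast
  next
    case (qs_add v w) thus ?case using free_add by blast
  next
    case (qs_smult v c) thus ?case using free_sm unfolding sm_def by blast
  qed
qed

end

lemma set_repeat: "set_mset (repeat_mset n P) \<subseteq> set_mset P" by (induction n) auto

context TC begin

definition DH where "DH H = {X \<in> Ob C. gcls C (gen X) \<in> H}"

lemma part1: assumes H: "qsubspace C H" shows "radical_dense C (DH H) \<and> im_delta C (DH H) = H"
proof -
  have HG: "H \<subseteq> GQ C" and H0: "gcls C 0 \<in> H"
    and Hadd: "\<And>a b. a \<in> freeQ C \<Longrightarrow> b \<in> freeQ C \<Longrightarrow> gcls C a \<in> H \<Longrightarrow> gcls C b \<in> H \<Longrightarrow> gcls C (a + b) \<in> H"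
    and Hsm0: "\<And>a c. a \<in> freeQ C \<Longrightarrow> gcls C a \<in> H \<Longrightarrow> gcls C (\<lambda>x. c * a x) \<in> H"
    using H unfolding qsubspace_def by blast+
  have Hsm: "\<And>a c. a \<in> freeQ C \<Longrightarrow> gcls C a \<in> H \<Longrightarrow> gcls C (sm c a) \<in> H" unfolding sm_def using Hsm0 by blast
  have Hrel: "\<And>a b. gcls C a \<in> H \<Longrightarrow> a - b \<in> relsQ C \<Longrightarrow> gcls C b \<in> H" using gcls_eq by metis
  let ?D = "DH H"
  have DOb: "?D \<subseteq> Ob C" unfolding DH_def by blast
  have neg: "\<And>X. X \<in> ?D \<Longrightarrow> gcls C (sm (-1) (gen X)) \<in> H" using Hsm free_gen unfolding DH_def by blast
  have T: "tri_subcat C ?D" unfolding tri_subcat_def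
  proof (intro conjI ballI allI impI)
    show "?D \<subseteq> Ob C" by (rule DOb)
  next
    fix X assume X: "X \<in> ?D"
    have "- (gen X + gen (sh C X)) \<in> relsQ C" using rels_neg rel_sh X DOb by blast
    moreover have "- (gen X + gen (sh C X)) = sm (-1) (gen X) - gen (sh C X)" unfolding sm_def by (rule ext) simp
    ultimately have "gcls C (gen (sh C X)) \<in> H" using Hrel neg X by metis
    thus "sh C X \<in> ?D" using X unfolding DH_def by simp
  next
    fix X assume X: "X \<in> Ob C" "sh C X \<in> ?D"
    have "- (gen X + gen (sh C X)) \<in> relsQ C" using rels_neg rel_sh X by blast
    moreover have "- (gen X + gen (sh C X)) = sm (-1) (gen (sh C X)) - gen X" unfolding sm_def by (rule ext) simp
    ultimately have "gcls C (gen X) \<in> H" using Hrel neg X by metis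
    thus "X \<in> ?D" using X unfolding DH_def by simp
  next
    fix X Y assume X: "X \<in> ?D" "isomorphic C X Y"
    have "- (gen Y - gen X) \<in> relsQ C" using rels_neg rel_iso X by blast
    moreover have "- (gen Y - gen X) = gen X - gen Y" by simp
    ultimately have "gcls C (gen Y) \<in> H" using Hrel X unfolding DH_def by auto
    thus "Y \<in> ?D" using X unfolding DH_def isomorphic_def by simp
  next
    fix X Y Z f g h assume t: "(X, Y, Z, f, g, h) \<in> Tri C" "X \<in> ?D" "Y \<in> ?D"
    have "gcls C (gen Y + sm (-1) (gen X)) \<in> H" using Hadd neg t free_gen free_sm unfolding DH_def by auto
    moreover have "gen Y + sm (-1) (gen X) - gen Z = gen Y - gen X - gen Z" unfolding sm_def by (rule ext) simp
    ultimately have "gcls C (gen Z) \<in> H" using Hrel rel_tri[OF t(1)] by metis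
    thus "Z \<in> ?D" using tri_shape[OF t(1)] unfolding DH_def by simp
  qed
  have Dn: "dense_subcat C ?D" unfolding dense_subcat_def
  proof (intro conjI T ballI)
    fix U assume U: "U \<in> Ob C"
    obtain S where S: "is_dsum C U (sh C U) S" using dsum_ex[of U "sh C U"] U by auto
    have "- (gen S - gen U - gen (sh C U)) - (gen U + gen (sh C U)) \<in> relsQ C"
      using rels_diff rels_neg rel_dsum[OF S] rel_sh U by blast
    moreover have "- (gen S - gen U - gen (sh C U)) - (gen U + gen (sh C U)) = 0 - gen S" by (simp add: algebra_simps)
    ultimately have "gcls C (gen S) \<in> H" using Hrel H0 by metis
    hence "S \<in> ?D" using dsumOb S unfolding DH_def by simp
    thus "\<exists>V\<in>Ob C. \<exists>S. is_dsum C U V S \<and> S \<in> ?D" using S U by auto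
  qed
  have Rd: "radical_subcat C ?D" unfolding radical_subcat_def
  proof (intro conjI T ballI impI)
    fix U assume U: "U \<in> Ob C" and "\<exists>n S. n \<ge> 1 \<and> is_power C U n S \<and> S \<in> ?D"
    then obtain n S where nS: "n \<ge> 1" "is_power C U n S" "S \<in> ?D" by blast
    have "gcls C (sm (of_nat n) (gen U)) \<in> H" using Hrel[of "gen S"] nS rel_power rels_neg unfolding DH_def
      by (metis (no_types, lifting) mem_Collect_eq minus_diff_eq)
    hence "gcls C (sm (1 / of_nat n) (sm (of_nat n) (gen U))) \<in> H" using Hsm free_sm free_gen U by blast
    moreover have "sm (1 / of_nat n) (sm (of_nat n) (gen U)) = gen U" unfolding sm_def using nS by (intro ext) simp
    ultimately show "U \<in> ?D" using U unfolding DH_def by simp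
  qed
  have sub: "\<And>b. b \<in> qspan (gen ` ?D) \<Longrightarrow> b \<in> freeQ C \<and> gcls C b \<in> H"
  proof -
    fix b assume "b \<in> qspan (gen ` ?D)"
    thus "b \<in> freeQ C \<and> gcls C b \<in> H"
    proof (induction rule: qspan.induct)
      case qs_zero show ?case using free_0 H0 by blast
    next
      case (qs_gen v) thus ?case using free_gen unfolding DH_def by auto
    next
      case (qs_add v w) thus ?case using free_add Hadd by blast
    next
      case (qs_smult v c) thus ?case using free_sm Hsm0 unfolding sm_def by blast
    qed
  qed
  have "im_delta C ?D = H"
  proof
    show "im_delta C ?D \<subseteq> H" unfolding im_delta_def using sub by blast
    show "H \<subseteq> im_delta C ?D"
    proof
      fix h assume h: "h \<in> H"
      then obtain a where a: "a \<in> freeQ C" "h = gcls C a" using HG unfolding GQ_def by blast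
      have "\<exists>N::nat. N > 0 \<and> (\<exists>P Q. (set_mset P \<subseteq> Ob C \<and> set_mset Q \<subseteq> Ob C) \<and> sm (of_nat N) a = vec P - vec Q)"
      proof (rule rep[of a "gen ` Ob C"])
        show "a \<in> qspan (gen ` Ob C)" using a unfolding freeQ_def by simp
        fix g assume "g \<in> gen ` Ob C"
        then obtain X where "X \<in> Ob C" "g = gen X" by blast
        moreover have "gen X = vec {#X#} - vec {#}" by (metis vec_single vec_empty diff_zero)
        ultimately show "\<exists>P Q. (set_mset P \<subseteq> Ob C \<and> set_mset Q \<subseteq> Ob C) \<and> g = vec P - vec Q"
          by (intro exI[of _ "{#X#}"] exI[of _ "{#}"]) auto
      qed (use set_repeat in \<open>auto intro: subset_trans dest!: set_repeat[THEN subsetD]\<close>)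
      then obtain N P Q where NPQ: "N > 0" "set_mset P \<subseteq> Ob C" "set_mset Q \<subseteq> Ob C" "sm (of_nat N) a = vec P - vec Q"
        by blast
      let ?M = "P + image_mset (sh C) Q"
      obtain S where S: "msum ?M S" using ms_ex NPQ shOb by (metis (no_types, lifting) image_subset_iff le_sup_iff set_image_mset set_mset_union subset_iff)
      have "(gen S - vec ?M) + (vec Q + vec (image_mset (sh C) Q)) \<in> relsQ C"
        using rels_add rel_msum[OF S] rel_MTM[OF NPQ(3)] by blast
      moreover have "(gen S - vec ?M) + (vec Q + vec (image_mset (sh C) Q)) = gen S - sm (of_nat N) a"
        using NPQ(4) by (simp add: algebra_simps)
      ultimately have r: "gen S - sm (of_nat N) a \<in> relsQ C" by metis
      have "gcls C (sm (of_nat N) a) \<in> H" using Hsm a h by blast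
      moreover have "sm (of_nat N) a - gen S \<in> relsQ C" using rels_neg[OF r] by simp
      ultimately have "gcls C (gen S) \<in> H" using Hrel by blast
      hence SD: "S \<in> ?D" using ms_Ob S unfolding DH_def by blast
      let ?b = "sm (1 / of_nat N) (gen S)"
      have b: "?b \<in> qspan (gen ` ?D)" using qspan_smI qs_gen SD by blast
      have "sm (1 / of_nat N) (gen S - sm (of_nat N) a) \<in> relsQ C" using rels_sm r by blast
      moreover have "sm (1 / of_nat N) (gen S - sm (of_nat N) a) = ?b - a" unfolding sm_def using NPQ(1)
        by (intro ext) (simp add: field_simps)
      ultimately have "gcls C ?b = gcls C a" using gcls_eq by metis
      thus "h \<in> im_delta C ?D" unfolding im_delta_def using a b by blast
    qed
  qed
  thus ?thesis using Dn Rd unfolding radical_dense_def by blast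
qed

end

context TC begin

lemma part2: assumes RD: "radical_dense C D" shows "D = {X \<in> Ob C. gcls C (gen X) \<in> im_delta C D}"
proof -
  have Dn: "dense_subcat C D" and Rd: "radical_subcat C D" using RD unfolding radical_dense_def by auto
  have T: "tri_subcat C D" using dense_sub Dn by blast
  have DOb: "D \<subseteq> Ob C" using T unfolding tri_subcat_def by blast
  show ?thesis
  proof
    show "D \<subseteq> {X \<in> Ob C. gcls C (gen X) \<in> im_delta C D}"
      unfolding im_delta_def using DOb qs_gen by blast
    show "{X \<in> Ob C. gcls C (gen X) \<in> im_delta C D} \<subseteq> D"
    proof
      fix X assume "X \<in> {X \<in> Ob C. gcls C (gen X) \<in> im_delta C D}"
      then obtain b where X: "X \<in> Ob C" and b: "b \<in> qspan (gen ` D)" "gcls C (gen X) = gcls C b"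
        unfolding im_delta_def by blast
      let ?G = "R0 \<union> gen ` D"
      have "gen X - b \<in> qspan ?G" using gcls_eq b(2) rels_R0 qspan_mono[of R0 ?G] by auto
      moreover have "b \<in> qspan ?G" using b(1) qspan_mono[of "gen ` D" ?G] by auto
      ultimately have "(gen X - b) + b \<in> qspan ?G" by (rule qs_add)
      hence gX: "gen X \<in> qspan ?G" by simp
      let ?R = "\<lambda>P Q. set_mset P \<subseteq> Ob C \<and> set_mset Q \<subseteq> Ob C \<and> good D (P + image_mset (sh C) Q)"
      have "\<exists>N::nat. N > 0 \<and> (\<exists>P Q. ?R P Q \<and> sm (of_nat N) (gen X) = vec P - vec Q)"
      proof (rule rep[OF gX])
        fix g assume "g \<in> ?G"
        then consider (i) X' Y where "g = gen Y - gen X'" "isomorphic C X' Y"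
          | (t) U V W f g' h where "g = gen V - gen U - gen W" "(U, V, W, f, g', h) \<in> Tri C"
          | (d) E where "E \<in> D" "g = gen E" unfolding R0_def by blast
        thus "\<exists>P Q. ?R P Q \<and> g = vec P - vec Q"
        proof cases
          case i
          have o: "X' \<in> Ob C" "Y \<in> Ob C" using i unfolding isomorphic_def by auto
          obtain W where W: "W \<in> D" "is_dsum C X' (sh C X') W" using XTX Dn o by blast
          have "is_dsum C Y (sh C X') W" using dsum_isoX W i by blast
          hence "msum (add_mset (sh C X') {#Y#}) W" using ms_add[OF ms_single[OF o(2)]] o by simp
          hence "good D ({#Y#} + image_mset (sh C) {#X'#})" unfolding good_def using W by (auto simp: add_mset_commute)
          moreover have "g = vec {#Y#} - vec {#X'#}" using i(1) by (simp only: vec_single)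
          ultimately show ?thesis using o by (intro exI[of _ "{#Y#}"] exI[of _ "{#X'#}"]) auto
        next
          case t
          have o: "U \<in> Ob C" "V \<in> Ob C" "W \<in> Ob C" using tri_shape[OF t(2)] by auto
          have "good D ({#V#} + image_mset (sh C) {#U, W#})" using good_tri Dn t by blast
          moreover have "g = vec {#V#} - vec {#U, W#}" using t by (simp add: vec_single vec_addm algebra_simps)
          ultimately show ?thesis using o by (intro exI[of _ "{#V#}"] exI[of _ "{#U, W#}"]) auto
        next
          case d
          have "good D ({#E#} + image_mset (sh C) {#})" using good_single T d by simp
          moreover have "g = vec {#E#} - vec {#}" using d by (metis vec_single vec_empty diff_zero)
          ultimately show ?thesis using d DOb by (intro exI[of _ "{#E#}"] exI[of _ "{#}"]) auto
        qed
      next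
        show "?R {#} {#}" using good_empty Dn by simp
      next
        fix P Q P' Q' assume r: "?R P Q" "?R P' Q'"
        have e: "P + P' + image_mset (sh C) (Q + Q') = (P + image_mset (sh C) Q) + (P' + image_mset (sh C) Q')"
          by (simp add: ac_simps)
        have "good D ((P + image_mset (sh C) Q) + (P' + image_mset (sh C) Q'))" using good_add[OF T] r by blast
        hence "good D (P + P' + image_mset (sh C) (Q + Q'))" unfolding e .
        thus "?R (P + P') (Q + Q')" using r by auto
      next
        fix P Q assume "?R P Q" thus "?R Q P" using good_sym[OF Dn] by blast
      next
        fix n P Q assume r: "?R P Q"
        have "repeat_mset n P + image_mset (sh C) (repeat_mset n Q) = repeat_mset n (P + image_mset (sh C) Q)"
          by (simp add: repeat_image)
        thus "?R (repeat_mset n P) (repeat_mset n Q)" using r good_repeat[OF Dn] set_repeat by (metis subset_trans)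
      qed
      then obtain N P Q where NPQ: "N > 0" "?R P Q" "sm (of_nat N) (gen X) = vec P - vec Q" by blast
      have PQ: "P = Q + repeat_mset N {#X#}"
      proof (rule multiset_eqI)
        fix x
        have "of_nat N * gen X x = (of_nat (count P x) :: rat) - of_nat (count Q x)"
          using fun_cong[OF NPQ(3), of x] unfolding sm_def vec_def by simp
        hence "(of_nat (count P x) :: rat) = of_nat (count Q x + N * count {#X#} x)"
          unfolding gen_def by (cases "x = X") (auto simp: algebra_simps)
        thus "count P x = count (Q + repeat_mset N {#X#}) x" by (simp only: of_nat_eq_iff count_union count_repeat_mset)
      qed
      have "good D ((Q + image_mset (sh C) Q) + repeat_mset N {#X#})"
        using NPQ(2) PQ by (simp add: ac_simps)
      hence g: "good D (repeat_mset N {#X#})"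
        using good_cancel[OF T _ good_MTM[OF Dn]] NPQ(2) X set_repeat by (metis set_mset_single subset_trans empty_subsetI insert_subset)
      obtain S where S: "is_power C X N S" "msum (repeat_mset N {#X#}) S" using ms_power[OF X, of N] NPQ(1) by auto
      have "S \<in> D" using good_all[OF T g S(2)] .
      moreover have "N \<ge> 1" using NPQ(1) by simp
      ultimately show "X \<in> D" using Rd X S(1) unfolding radical_subcat_def by blast
    qed
  qed
qed

lemma part2': "radical_dense C D1 \<Longrightarrow> radical_dense C D2 \<Longrightarrow> im_delta C D1 = im_delta C D2 \<Longrightarrow> D1 = D2"
  using part2 by metis

end

theorem theorem1p8:
  fixes C :: "('o, 'm) tricat"
  assumes "triangulated C"
  shows "(\<forall>H. qsubspace C H \<longrightarrow> (\<exists>D. radical_dense C D \<and> im_delta C D = H))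
    \<and> (\<forall>D1 D2. radical_dense C D1 \<longrightarrow> radical_dense C D2 \<longrightarrow>
          im_delta C D1 = im_delta C D2 \<longrightarrow> D1 = D2)
    \<and> (\<forall>H1 H2. qsubspace C H1 \<longrightarrow> qsubspace C H2 \<longrightarrow>
          (D_of C H1 \<subseteq> D_of C H2 \<longleftrightarrow> H1 \<subseteq> H2))"
proof -
  interpret TC C using assms by unfold_locales
  have DO: "\<And>H. qsubspace C H \<Longrightarrow> D_of C H = DH H"
  proof -
    fix H assume H: "qsubspace C H"
    show "D_of C H = DH H" unfolding D_of_def
    proof (rule the_equality)
      show "radical_dense C (DH H) \<and> im_delta C (DH H) = H" using part1[OF H] .
      fix D assume "radical_dense C D \<and> im_delta C D = H"
      thus "D = DH H" using part1[OF H] part2' by metis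
    qed
  qed
  have 3: "\<And>H1 H2. qsubspace C H1 \<Longrightarrow> qsubspace C H2 \<Longrightarrow> (D_of C H1 \<subseteq> D_of C H2 \<longleftrightarrow> H1 \<subseteq> H2)"
  proof -
    fix H1 H2 assume H1: "qsubspace C H1" and H2: "qsubspace C H2"
    show "D_of C H1 \<subseteq> D_of C H2 \<longleftrightarrow> H1 \<subseteq> H2"
    proof
      assume "D_of C H1 \<subseteq> D_of C H2"
      hence sub: "DH H1 \<subseteq> DH H2" using DO H1 H2 by simp
      have "im_delta C (DH H1) \<subseteq> im_delta C (DH H2)"
        unfolding im_delta_def using qspan_mono[of "gen ` DH H1" "gen ` DH H2"] sub by blast
      thus "H1 \<subseteq> H2" using part1 H1 H2 by simp
    next
      assume "H1 \<subseteq> H2"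
      hence "DH H1 \<subseteq> DH H2" unfolding DH_def by blast
      thus "D_of C H1 \<subseteq> D_of C H2" using DO H1 H2 by simp
    qed
  qed
  show ?thesis using part1 part2' 3 by blast
qed

end
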